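(* For every cache size $k\ge1$, the algorithm Mark&Predict (described in the context) is a randomized $\big(2,H_k,\gamma(\eta_1/\mathrm{OPT})\big)$-competitive algorithm for the phase-predictions setup, where $H_k=\sum_{j=1}^k1/j$ and $\gamma(x)=2x^{-1}(\ln(2x+1)+1)$. That is, there is a constant $b$ (possibly depending on $k$) such that for every request sequence $I$ and every prediction vector $p$ with $\mathrm{OPT}(I)>0$ and $\eta_1>0$, $\mathbb{E}[\mathrm{ALG}(I,p)]\le 2\,\mathrm{OPT}(I)+H_k\,\eta_0+\gamma\big(\eta_1/\mathrm{OPT}(I)\big)\,\eta_1+b.$
   Context: Paging: there is a universe $U$ of pages and a cache holding at most $k$ pages, initially empty. Requests $r_1,\dots,r_n\in U$ arrive online. If the requested page is not in the cache (a page fault), it must be loaded into the cache, evicting some cached page if the cache already holds $k$ pages. The cost of an algorithm is its number of page faults; $\mathrm{OPT}(I)$ is the minimum cost of an offline algorithm on request sequence $I$. Along with each request $r_i$ the online algorithm receives a prediction bit $p_i\in\{0,1\}$ (which may be arbitrary). A page whose most recent prediction is $0$ (resp. $1$) is called a $0$-page (resp. $1$-page). Phase-predictions setup: partition the request sequence into $k$-phases: the first starts at $r_1$, each phase is a maximal contiguous segment containing at most $k$ distinct pages, and each subsequent phase starts right after the previous one ends. For a request $r_i$ in phase $j$, the ground truth is $p_i^*=0$ if page $r_i$ is requested in phase $j+1$ and $p_i^*=1$ otherwise. The errors are $\eta_h$ ($h\in\{0,1\}$) = number of counted requests $i$ with $p_i=h$ and $p_i^*=1-h$, where the counted requests are,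 for each phase $j$ other than the last phase and each page requested in phase $j$, only the last request to that page within phase $j$ (predictions in the last phase are not counted). Algorithm Mark&Predict: pages carry a mark. On request $r_i$: if $r_i$ is not in the cache and the cache is full, then (i) if all cached pages are marked, unmark all pages (start of a new phase); (ii) if there is an unmarked $1$-page in the cache, evict one chosen uniformly at random among unmarked $1$-pages, otherwise evict an unmarked $0$-page chosen uniformly at random; then load $r_i$. Finally (in all cases) mark $r_i$. *)

theory Defs
  imports "HOL-Probability.Probability"
begin

text \<open>An offline (demand-paging) run on request list rs with cache size k is a list of
  cache contents Cs, where Cs!i is the cache before request i (Cs!0 is empty).\<close>

definition offline_run :: "nat \<Rightarrow> 'a list \<Rightarrow> 'a set list \<Rightarrow> bool" where
  "offline_run k rs Cs \<longleftrightarrow>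
     length Cs = Suc (length rs) \<and> Cs ! 0 = {} \<and>
     (\<forall>i < length rs.
        (if rs ! i \<in> Cs ! i then Cs ! Suc i = Cs ! i
         else if card (Cs ! i) < k then Cs ! Suc i = insert (rs ! i) (Cs ! i)
         else (\<exists>q \<in> Cs ! i. Cs ! Suc i = insert (rs ! i) (Cs ! i - {q}))))"

definition run_cost :: "'a list \<Rightarrow> 'a set list \<Rightarrow> nat" where
  "run_cost rs Cs = card {i. i < length rs \<and> rs ! i \<notin> Cs ! i}"

definition OPT :: "nat \<Rightarrow> 'a list \<Rightarrow> nat" where
  "OPT k rs = Min {run_cost rs Cs | Cs. offline_run k rs Cs}"

definition next_start :: "nat \<Rightarrow> 'a list \<Rightarrow> nat \<Rightarrow> nat" where
  "next_start k rs s =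
     (if s < length rs then
        (LEAST t. s < t \<and> (t = length rs \<or> card (set (take (Suc t - s) (drop s rs))) > k))
      else length rs)"

text \<open>Start index of the j-th phase (0-based); phase j is the index interval
  [phase_start j, phase_start (j+1)). Beyond the end phases are empty.\<close>

definition phase_start :: "nat \<Rightarrow> 'a list \<Rightarrow> nat \<Rightarrow> nat" where
  "phase_start k rs j = (next_start k rs ^^ j) 0"

definition counted :: "nat \<Rightarrow> 'a list \<Rightarrow> nat \<Rightarrow> bool" where
  "counted k rs i \<longleftrightarrow> (\<exists>j. phase_start k rs j \<le> i \<and> i < phase_start k rs (Suc j) \<and>
      phase_start k rs (Suc j) < length rs \<and>
      \<not> (\<exists>i'. i < i' \<and> i' < phase_start k rs (Suc j) \<and> rs ! i' = rs ! i))"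

text \<open>Ground truth bit (True = 1): p*_i = 0 iff page rs!i is requested in the next phase.\<close>

definition truth :: "nat \<Rightarrow> 'a list \<Rightarrow> nat \<Rightarrow> bool" where
  "truth k rs i \<longleftrightarrow> (\<forall>j. phase_start k rs j \<le> i \<and> i < phase_start k rs (Suc j) \<longrightarrow>
      \<not> (\<exists>i'. phase_start k rs (Suc j) \<le> i' \<and> i' < phase_start k rs (Suc (Suc j)) \<and>
             rs ! i' = rs ! i))"

definition eta :: "nat \<Rightarrow> 'a list \<Rightarrow> bool list \<Rightarrow> bool \<Rightarrow> nat" where
  "eta k rs ps h = card {i. i < length rs \<and> counted k rs i \<and> ps ! i = h \<and> truth k rs i = (\<not> h)}"

text \<open>State: (cache, marked pages, most recent prediction per page, number of faults so far).\<close>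

type_synonym 'a mp_state = "'a set \<times> 'a set \<times> ('a \<Rightarrow> bool) \<times> nat"

fun mp_step :: "nat \<Rightarrow> 'a \<times> bool \<Rightarrow> 'a mp_state \<Rightarrow> 'a mp_state pmf" where
  "mp_step k (r, p) (C, M, pr, c) =
     (if r \<in> C then return_pmf (C, insert r M, pr(r := p), c)
      else if card C < k then return_pmf (insert r C, insert r M, pr(r := p), Suc c)
      else
        (let M' = (if C \<subseteq> M then {} else M);
             U = C - M';
             U1 = {q \<in> U. pr q};
             E = (if U1 \<noteq> {} then U1 else U)
         in map_pmf (\<lambda>q. (insert r (C - {q}), insert r M', pr(r := p), Suc c)) (pmf_of_set E)))"

definition mp_run :: "nat \<Rightarrow> 'a list \<Rightarrow> bool list \<Rightarrow> 'a mp_state pmf" where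
  "mp_run k rs ps =
     foldl (\<lambda>D rp. bind_pmf D (mp_step k rp)) (return_pmf ({}, {}, \<lambda>_. False, 0)) (zip rs ps)"

definition mp_expected_cost :: "nat \<Rightarrow> 'a list \<Rightarrow> bool list \<Rightarrow> real" where
  "mp_expected_cost k rs ps =
     measure_pmf.expectation (mp_run k rs ps) (\<lambda>s. real (snd (snd (snd s))))"

definition H :: "nat \<Rightarrow> real" where
  "H k = (\<Sum>j = 1..k. 1 / real j)"

definition gamma :: "real \<Rightarrow> real" where
  "gamma x = 2 / x * (ln (2 * x + 1) + 1)"

end

theory Submission
  imports Defs
begin

definition prj :: "'a mp_state \<Rightarrow> 'a set \<times> 'a set \<times> ('a \<Rightarrow> bool)" where
  "prj s = (fst s, fst (snd s), fst (snd (snd s)))"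

definition step3 :: "nat \<Rightarrow> 'a \<times> bool \<Rightarrow> 'a set \<times> 'a set \<times> ('a \<Rightarrow> bool)
    \<Rightarrow> ('a set \<times> 'a set \<times> ('a \<Rightarrow> bool)) pmf" where
  "step3 k rp s = map_pmf prj (mp_step k rp (fst s, fst (snd s), snd (snd s), 0))"

definition app :: "('a \<Rightarrow> 'a) \<Rightarrow> 'a set \<times> 'a set \<times> ('a \<Rightarrow> bool) \<Rightarrow> 'a set \<times> 'a set \<times> ('a \<Rightarrow> bool)" where
  "app \<sigma> s = (\<sigma> ` fst s, \<sigma> ` fst (snd s), snd (snd s))"

lemma prj_step: "map_pmf prj (mp_step k (r,p) (C,M,pr,c)) = step3 k (r,p) (C,M,pr)"
  by (simp add: step3_def Let_def map_pmf_comp prj_def)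

lemma step3_hit: "r \<in> C \<Longrightarrow> step3 k (r,p) (C,M,pr) = return_pmf (C, insert r M, pr(r:=p))"
  by (simp add: step3_def prj_def)

lemma step3_ins: "r \<notin> C \<Longrightarrow> card C < k \<Longrightarrow>
   step3 k (r,p) (C,M,pr) = return_pmf (insert r C, insert r M, pr(r:=p))"
  by (simp add: step3_def prj_def)

lemma step3_else:
  fixes M C :: "'a set" and pr :: "'a \<Rightarrow> bool"
  assumes "r \<notin> C" "\<not> card C < k" "k \<ge> 1"
  defines "M' \<equiv> (if C \<subseteq> M then {} else M)"
  defines "U \<equiv> C - M'"
  defines "E \<equiv> (if {q\<in>U. pr q} \<noteq> {} then {q\<in>U. pr q} else U)"
  shows "step3 k (r,p) (C,M,pr) = map_pmf (\<lambda>q. (insert r (C - {q}), insert r M', pr(r:=p))) (pmf_of_set E)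
     \<and> finite E \<and> E \<noteq> {} \<and> E \<subseteq> C"
proof -
  have fin: "finite C" using assms(2,3) card.infinite by fastforce
  have ne: "C \<noteq> {}" using assms(2,3) by auto
  have "U \<noteq> {}" unfolding U_def M'_def using ne by auto
  hence "E \<noteq> {}" unfolding E_def by auto
  moreover have "E \<subseteq> C" unfolding E_def U_def by auto
  moreover have "finite E" using fin calculation(2) finite_subset by blast
  moreover have "step3 k (r,p) (C,M,pr) = map_pmf (\<lambda>q. (insert r (C - {q}), insert r M', pr(r:=p))) (pmf_of_set E)"
    using assms(1,2) unfolding step3_def E_def U_def M'_def
    by (simp add: Let_def map_pmf_comp prj_def)
  ultimately show ?thesis by blast
qed

lemma step3_equiv:
  assumes "bij \<sigma>" "\<sigma> r = r" "\<sigma> ` M = M" "\<And>x. pr (\<sigma> x) = pr x" "k \<ge> 1"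
  shows "step3 k (r,p) (\<sigma> ` C, M, pr) = map_pmf (app \<sigma>) (step3 k (r,p) (C, M, pr))"
proof -
  have inj: "inj \<sigma>" using assms(1) bij_is_inj by auto
  have memC: "r \<in> \<sigma> ` C \<longleftrightarrow> r \<in> C" using inj assms(2) by (metis inj_image_mem_iff)
  have cardC: "card (\<sigma> ` C) = card C" using inj by (simp add: card_image inj_on_subset)
  have sub: "\<sigma> ` C \<subseteq> M \<longleftrightarrow> C \<subseteq> M"
    by (metis assms(3) inj inj_image_subset_iff)
  have insM: "\<sigma> ` insert r M = insert r M" using assms(2,3) by simp
  show ?thesis
  proof (cases "r \<in> C")
    case True
    then show ?thesis using memC insM by (simp add: step3_hit app_def)
  next
    case False
    note F = False
    show ?thesis
    proof (cases "card C < k")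
      case True
      then show ?thesis using F memC insM cardC assms(2) by (simp add: step3_ins app_def)
    next
      case False
      define M' where "M' = (if C \<subseteq> M then {} else M)"
      define U where "U = C - M'"
      define E where "E = (if {q\<in>U. pr q} \<noteq> {} then {q\<in>U. pr q} else U)"
      have A: "step3 k (r,p) (C,M,pr) = map_pmf (\<lambda>q. (insert r (C - {q}), insert r M', pr(r:=p))) (pmf_of_set E)
         \<and> finite E \<and> E \<noteq> {} \<and> E \<subseteq> C"
        using step3_else[OF F False assms(5)] unfolding M'_def U_def E_def by blast
      have M'2: "(if \<sigma> ` C \<subseteq> M then {} else M) = M'" using sub M'_def by simp
      have sM': "\<sigma> ` M' = M'" using assms(3) M'_def by auto
      have U2: "\<sigma> ` C - M' = \<sigma> ` U" unfolding U_def using sM' inj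
        by (metis image_set_diff)
      have U12: "{q \<in> \<sigma> ` U. pr q} = \<sigma> ` {q\<in>U. pr q}" using assms(4) by auto
      have E2: "(if {q\<in>\<sigma> ` U. pr q} \<noteq> {} then {q\<in>\<sigma> ` U. pr q} else \<sigma> ` U) = \<sigma> ` E"
        unfolding E_def U12 by auto
      have B: "step3 k (r,p) (\<sigma> ` C,M,pr) = map_pmf (\<lambda>q. (insert r (\<sigma> ` C - {q}), insert r M', pr(r:=p))) (pmf_of_set (\<sigma> ` E))"
        using step3_else[where C="\<sigma> ` C" and M=M and pr=pr and r=r and k=k and p=p] F memC cardC False assms(5)
        by (simp only: M'2 U2 E2 not_False_eq_True simp_thms)
      have P: "pmf_of_set (\<sigma> ` E) = map_pmf \<sigma> (pmf_of_set E)"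
        using A by (simp add: map_pmf_of_set_inj inj_on_subset[OF inj])
      show ?thesis unfolding B A[THEN conjunct1] P map_pmf_comp
      proof (rule map_pmf_cong[OF refl])
        fix q assume "q \<in> set_pmf (pmf_of_set E)"
        have "\<sigma> ` (C - {q}) = \<sigma> ` C - {\<sigma> q}" using inj by (simp add: image_set_diff)
        then show "(insert r (\<sigma> ` C - {\<sigma> q}), insert r M', pr(r := p)) =
          app \<sigma> (insert r (C - {q}), insert r M', pr(r := p))"
          unfolding app_def using assms(2) sM' by simp
      qed
    qed
  qed
qed


definition good :: "'a set \<Rightarrow> 'a set \<Rightarrow> nat \<Rightarrow> ('a \<Rightarrow> bool) \<Rightarrow> 'a set \<times> 'a set \<times> ('a \<Rightarrow> bool) \<Rightarrow> bool" where
  "good M U h pr s \<longleftrightarrow> fst (snd s) = M \<and> snd (snd s) = pr \<and>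
     (\<exists>S. S \<subseteq> U \<and> card S = h \<and> (S \<subseteq> {q\<in>U. pr q} \<or> {q\<in>U. pr q} \<subseteq> S) \<and> fst s = M \<union> (U - S))"

definition INV :: "'a set \<Rightarrow> 'a set \<Rightarrow> nat \<Rightarrow> ('a \<Rightarrow> bool) \<Rightarrow> ('a set \<times> 'a set \<times> ('a \<Rightarrow> bool)) pmf \<Rightarrow> bool" where
  "INV M U h pr D \<longleftrightarrow> finite (set_pmf D) \<and> (\<forall>s\<in>set_pmf D. good M U h pr s) \<and>
     (\<forall>\<sigma>. bij \<sigma> \<and> (\<forall>x. x \<notin> U \<longrightarrow> \<sigma> x = x) \<and> (\<forall>x. pr (\<sigma> x) = pr x) \<longrightarrow> map_pmf (app \<sigma>) D = D)"

definition DI :: "nat \<Rightarrow> 'a set \<Rightarrow> 'a set \<Rightarrow> nat \<Rightarrow> bool" where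
  "DI k M U h \<longleftrightarrow> finite M \<and> finite U \<and> M \<inter> U = {} \<and> h \<le> card U \<and> card M + card U - h \<le> k \<and>
     (U \<noteq> {} \<longrightarrow> card M + card U - h = k)"

fun sh_step :: "nat \<Rightarrow> 'a \<times> bool \<Rightarrow> 'a set \<times> 'a set \<times> nat \<times> ('a \<Rightarrow> bool) \<Rightarrow> 'a set \<times> 'a set \<times> nat \<times> ('a \<Rightarrow> bool)" where
  "sh_step k (r,p) (M,U,h,pr) =
    (if r \<in> M then (M, U, h, pr(r:=p))
     else if r \<in> U \<and> h < card U then (insert r M, U - {r}, h, pr(r:=p))
     else if card M + card U - h < k then (insert r M, U, h, pr(r:=p))
     else if h < card U then (insert r M, U, Suc h, pr(r:=p))
     else ({r}, M, 1, pr(r:=p)))"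

lemma DI_step:
  assumes "k \<ge> 1" "DI k M U h" "sh_step k (r,p) (M,U,h,pr) = (M2,U2,h2,pr2)"
  shows "DI k M2 U2 h2"
proof -
  have f: "finite M" "finite U" "M \<inter> U = {}" "h \<le> card U" "card M + card U - h \<le> k"
    "U \<noteq> {} \<Longrightarrow> card M + card U - h = k" using assms(2) unfolding DI_def by auto
  show ?thesis
  proof (cases "r \<in> M")
    case True then show ?thesis using assms by simp
  next
    case c1: False
    show ?thesis
    proof (cases "r \<in> U \<and> h < card U")
      case True
      have sh: "M2 = insert r M" "U2 = U - {r}" "h2 = h" using assms(3) c1 True by auto
      have a: "card (insert r M) = Suc (card M)" using c1 f by simp
      have b: "card (U - {r}) = card U - 1" using True f by simp
      have c: "card M + card U - h = k" using f(6) True by auto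
      have "card M2 + card U2 - h2 = k" unfolding sh a b using c True by auto
      then show ?thesis unfolding DI_def sh using f True by auto
    next
      case c2: False
      show ?thesis
      proof (cases "card M + card U - h < k")
        case True
        then have U0: "U = {}" using f by auto
        have sh: "M2 = insert r M" "U2 = U" "h2 = h" using assms(3) c1 c2 True by auto
        have a: "card (insert r M) = Suc (card M)" using c1 f by simp
        have "h = 0" using U0 f by simp
        then show ?thesis unfolding DI_def sh a using U0 f True by simp
      next
        case c3: False
        show ?thesis
        proof (cases "h < card U")
          case True
          then have "r \<notin> U" using c2 by auto
          have sh: "M2 = insert r M" "U2 = U" "h2 = Suc h" using assms(3) c1 c2 c3 True by auto
          have a: "card (insert r M) = Suc (card M)" using c1 f by simp
          have b: "card M + card U - h = k" using c3 f by simp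
          show ?thesis unfolding DI_def sh a using f True \<open>r \<notin> U\<close> b c1 by auto
        next
          case False
          then have "h = card U" using f by auto
          then have cM: "card M = k" using f c3 by auto
          then have "M \<noteq> {}" using assms(1) by auto
          have sh: "M2 = {r}" "U2 = M" "h2 = 1" using assms(3) c1 c2 c3 False by auto
          show ?thesis unfolding DI_def sh using cM c1 f \<open>M \<noteq> {}\<close> assms(1) by (simp add: Suc_leI card_gt_0_iff)
        qed
      qed
    qed
  qed
qed

lemma card_cache:
  assumes "finite M" "finite U" "M \<inter> U = {}" "S \<subseteq> U"
  shows "card (M \<union> (U - S)) = card M + card U - card S"
proof -
  have "card (M \<union> (U - S)) = card M + card (U - S)"
    using assms by (intro card_Un_disjoint) auto
  moreover have "card (U - S) = card U - card S" using assms by (simp add: card_Diff_subset finite_subset)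
  moreover have "card S \<le> card U" using assms card_mono by blast
  ultimately show ?thesis by simp
qed

lemma goodI: "s = (C, M, pr) \<Longrightarrow> S \<subseteq> U \<Longrightarrow> card S = h \<Longrightarrow> (S \<subseteq> {q\<in>U. pr q} \<or> {q\<in>U. pr q} \<subseteq> S)
   \<Longrightarrow> C = M \<union> (U - S) \<Longrightarrow> good M U h pr s"
  by (auto simp: good_def)


lemma step3_nsub:
  fixes M C :: "'a set" and pr :: "'a \<Rightarrow> bool"
  assumes "r \<notin> C" "\<not> card C < k" "k \<ge> 1" "\<not> C \<subseteq> M"
  defines "E \<equiv> (if {q\<in>C - M. pr q} \<noteq> {} then {q\<in>C - M. pr q} else C - M)"
  shows "step3 k (r,p) (C,M,pr) = map_pmf (\<lambda>q. (insert r (C - {q}), insert r M, pr(r:=p))) (pmf_of_set E)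
     \<and> finite E \<and> E \<noteq> {} \<and> E \<subseteq> C"
proof -
  have e: "(if C \<subseteq> M then {} else M) = M" using assms(4) by simp
  show ?thesis using step3_else[OF assms(1-3), where M=M and pr=pr and p=p] unfolding e E_def by blast
qed

lemma step3_sub:
  fixes M C :: "'a set" and pr :: "'a \<Rightarrow> bool"
  assumes "r \<notin> C" "\<not> card C < k" "k \<ge> 1" "C \<subseteq> M"
  defines "E \<equiv> (if {q\<in>C. pr q} \<noteq> {} then {q\<in>C. pr q} else C)"
  shows "step3 k (r,p) (C,M,pr) = map_pmf (\<lambda>q. (insert r (C - {q}), {r}, pr(r:=p))) (pmf_of_set E)
     \<and> finite E \<and> E \<noteq> {} \<and> E \<subseteq> C"
proof -
  have e: "(if C \<subseteq> M then {} else M) = {}" using assms(4) by simp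
  have e2: "C - {} = C" by simp
  show ?thesis using step3_else[OF assms(1-3), where M=M and pr=pr and p=p] unfolding e e2 E_def by simp
qed

lemma good_step:
  assumes "k \<ge> 1" "DI k M U h" "good M U h pr s" "sh_step k (r,p) (M,U,h,pr) = (M2,U2,h2,pr2)"
    "s' \<in> set_pmf (step3 k (r,p) s)"
  shows "good M2 U2 h2 pr2 s'"
proof -
  have f: "finite M" "finite U" "M \<inter> U = {}" "h \<le> card U" "card M + card U - h \<le> k"
    "U \<noteq> {} \<Longrightarrow> card M + card U - h = k" using assms(2) unfolding DI_def by auto
  obtain C S where s: "s = (C, M, pr)" and S: "S \<subseteq> U" "card S = h"
    "S \<subseteq> {q\<in>U. pr q} \<or> {q\<in>U. pr q} \<subseteq> S" and C: "C = M \<union> (U - S)"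
    using assms(3) unfolding good_def by (cases s) auto
  have finS: "finite S" using S f finite_subset by blast
  have cardC: "card C = card M + card U - h" using card_cache[OF f(1-3) S(1)] S C by simp
  have finC: "finite C" using C f by simp
  note s' = assms(5)[unfolded s]
  show ?thesis
  proof (cases "r \<in> M")
    case True
    then have "r \<in> C" using C by auto
    then have s'q: "s' = (C, M, pr(r:=p))" using s' True by (simp add: step3_hit insert_absorb)
    have U1': "{q\<in>U. (pr(r:=p)) q} = {q\<in>U. pr q}" using True f by auto
    have sh: "M2 = M" "U2 = U" "h2 = h" "pr2 = pr(r:=p)" using assms(4) True by auto
    show ?thesis unfolding sh
      by (rule goodI[OF s'q S(1,2) _ C]) (simp only: U1' S(3))
  next
    case c1: False
    show ?thesis
    proof (cases "r \<in> U \<and> h < card U")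
      case c2: True
      have sh: "M2 = insert r M" "U2 = U - {r}" "h2 = h" "pr2 = pr(r:=p)" using assms(4) c1 c2 by auto
      have U1': "{q\<in>U - {r}. (pr(r:=p)) q} = {q\<in>U. pr q} - {r}" by auto
      show ?thesis
      proof (cases "r \<in> S")
        case False
        then have "r \<in> C" using C c2 by auto
        then have s'q: "s' = (C, insert r M, pr(r:=p))" using s' by (simp add: step3_hit)
        have C2: "C = insert r M \<union> (U - {r} - S)" using C c2 False by auto
        have S2: "S \<subseteq> U - {r}" using S False by auto
        have S3: "S \<subseteq> {q\<in>U. pr q} - {r} \<or> {q\<in>U. pr q} - {r} \<subseteq> S" using S(3) False by auto
        show ?thesis unfolding sh
          by (rule goodI[OF s'q S2 S(2) _ C2]) (simp only: U1' S3)
      next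
        case rS: True
        then have rC: "r \<notin> C" using C c1 by auto
        have "U \<noteq> {}" using c2 by auto
        then have ck: "\<not> card C < k" using cardC f by auto
        have "\<not> U \<subseteq> S"
        proof
          assume "U \<subseteq> S" then have "S = U" using S(1) by auto
          then show False using c2 S(2) by simp
        qed
        then obtain x where x: "x \<in> U" "x \<notin> S" by auto
        have nsub: "\<not> C \<subseteq> M" using x C f by auto
        have CM: "C - M = U - S" using C f by auto
        define E where "E = (if {q\<in>U - S. pr q} \<noteq> {} then {q\<in>U - S. pr q} else U - S)"
        have st: "step3 k (r,p) (C,M,pr) = map_pmf (\<lambda>q. (insert r (C - {q}), insert r M, pr(r:=p))) (pmf_of_set E)
           \<and> finite E \<and> E \<noteq> {} \<and> E \<subseteq> C"
          using step3_nsub[OF rC ck assms(1) nsub, where pr=pr and p=p] unfolding E_def CM by blast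
        then obtain q where q: "q \<in> E" and s'q: "s' = (insert r (C - {q}), insert r M, pr(r:=p))"
          using s' by auto
        have qU: "q \<in> U" "q \<notin> S" using q unfolding E_def by (auto split: if_splits)
        define S' where "S' = insert q (S - {r})"
        have h1: "h > 0" using rS finS S(2) card_gt_0_iff by blast
        have a: "card S' = h" unfolding S'_def using qU rS finS S h1 by (simp add: card_Diff_singleton)
        have b: "S' \<subseteq> U - {r}" unfolding S'_def using qU rS S by auto
        have c: "insert r (C - {q}) = insert r M \<union> (U - {r} - S')"
          unfolding S'_def using C qU f rS by auto
        have d: "S' \<subseteq> {q\<in>U. pr q} - {r} \<or> {q\<in>U. pr q} - {r} \<subseteq> S'"
        proof (cases "{q\<in>U - S. pr q} \<noteq> {}")
          case True
          then have "pr q" using q unfolding E_def by auto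
          moreover have "S \<subseteq> {q\<in>U. pr q}" using S(3) True by auto
          ultimately show ?thesis unfolding S'_def using qU rS by auto
        next
          case False
          then have "{q\<in>U. pr q} \<subseteq> S" by auto
          then show ?thesis unfolding S'_def by auto
        qed
        show ?thesis unfolding sh
          by (rule goodI[OF s'q b a _ c]) (simp only: U1' d)
      qed
    next
      case c2: False
      show ?thesis
      proof (cases "card M + card U - h < k")
        case c3: True
        then have U0: "U = {}" using f by auto
        then have "S = {}" "h = 0" using S by auto
        then have CM: "C = M" using C U0 by auto
        have sh: "M2 = insert r M" "U2 = U" "h2 = h" "pr2 = pr(r:=p)" using assms(4) c1 c2 c3 by auto
        have s'q: "s' = (insert r M, insert r M, pr(r:=p))"
          using s' c1 c3 cardC CM by (simp add: step3_ins)
        show ?thesis unfolding sh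
          by (rule goodI[OF s'q, of "{}"]) (use U0 \<open>h = 0\<close> in auto)
      next
        case c3: False
        then have ck: "\<not> card C < k" using cardC by simp
        show ?thesis
        proof (cases "h < card U")
          case c4: True
          then have rU: "r \<notin> U" using c2 by auto
          have rC: "r \<notin> C" using rU c1 C by auto
          have sh: "M2 = insert r M" "U2 = U" "h2 = Suc h" "pr2 = pr(r:=p)" using assms(4) c1 c2 c3 c4 by auto
          have U1': "{q\<in>U. (pr(r:=p)) q} = {q\<in>U. pr q}" using rU by auto
          have "\<not> U \<subseteq> S"
          proof
            assume "U \<subseteq> S" then have "S = U" using S(1) by auto
            then show False using c4 S(2) by simp
          qed
          then obtain x where x: "x \<in> U" "x \<notin> S" by auto
          have nsub: "\<not> C \<subseteq> M" using x C f by auto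
          have CM: "C - M = U - S" using C f by auto
          define E where "E = (if {q\<in>U - S. pr q} \<noteq> {} then {q\<in>U - S. pr q} else U - S)"
          have st: "step3 k (r,p) (C,M,pr) = map_pmf (\<lambda>q. (insert r (C - {q}), insert r M, pr(r:=p))) (pmf_of_set E)
             \<and> finite E \<and> E \<noteq> {} \<and> E \<subseteq> C"
            using step3_nsub[OF rC ck assms(1) nsub, where pr=pr and p=p] unfolding E_def CM by blast
          then obtain q where q: "q \<in> E" and s'q: "s' = (insert r (C - {q}), insert r M, pr(r:=p))"
            using s' by auto
          have qU: "q \<in> U" "q \<notin> S" using q unfolding E_def by (auto split: if_splits)
          define S' where "S' = insert q S"
          have a: "card S' = Suc h" unfolding S'_def using qU finS S by simp
          have b: "S' \<subseteq> U" unfolding S'_def using qU S by auto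
          have c: "insert r (C - {q}) = insert r M \<union> (U - S')"
            unfolding S'_def using C qU f by auto
          have d: "S' \<subseteq> {q\<in>U. pr q} \<or> {q\<in>U. pr q} \<subseteq> S'"
          proof (cases "{q\<in>U - S. pr q} \<noteq> {}")
            case True
            then have "pr q" using q unfolding E_def by auto
            moreover have "S \<subseteq> {q\<in>U. pr q}" using S(3) True by auto
            ultimately show ?thesis unfolding S'_def using qU by auto
          next
            case False
            then have "{q\<in>U. pr q} \<subseteq> S" by auto
            then show ?thesis unfolding S'_def by auto
          qed
          show ?thesis unfolding sh
            by (rule goodI[OF s'q b a _ c]) (simp only: U1' d)
        next
          case c4: False
          then have hU: "h = card U" using f by auto
          then have SU: "S = U" using S f by (metis card_subset_eq)
          then have CM: "C = M" using C by auto
          have rC: "r \<notin> C" using CM c1 by auto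
          have CMs: "C \<subseteq> M" using CM by simp
          have sh: "M2 = {r}" "U2 = M" "h2 = 1" "pr2 = pr(r:=p)" using assms(4) c1 c2 c3 c4 by auto
          have U1': "{q\<in>M. (pr(r:=p)) q} = {q\<in>M. pr q}" using c1 by auto
          define E where "E = (if {q\<in>M. pr q} \<noteq> {} then {q\<in>M. pr q} else M)"
          have st: "step3 k (r,p) (C,M,pr) = map_pmf (\<lambda>q. (insert r (C - {q}), {r}, pr(r:=p))) (pmf_of_set E)
             \<and> finite E \<and> E \<noteq> {} \<and> E \<subseteq> C"
            using step3_sub[OF rC ck assms(1) CMs, where pr=pr and p=p] unfolding E_def CM by blast
          then obtain q where q: "q \<in> E" and s'q: "s' = (insert r (C - {q}), {r}, pr(r:=p))"
            using s' by auto
          have qM: "q \<in> M" using q unfolding E_def by (auto split: if_splits)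
          have b: "{q} \<subseteq> M" using qM by auto
          have c: "insert r (C - {q}) = {r} \<union> (M - {q})" using CM by auto
          have d: "{q} \<subseteq> {q\<in>M. pr q} \<or> {q\<in>M. pr q} \<subseteq> {q}"
            using q unfolding E_def by (auto split: if_splits)
          show ?thesis unfolding sh
            by (rule goodI[OF s'q b _ _ c]) (simp_all only: U1' d card.empty card_insert_disjoint finite.emptyI empty_iff not_False_eq_True One_nat_def)
        qed
      qed
    qed
  qed
qed


lemma fin_step3: "k \<ge> 1 \<Longrightarrow> finite (set_pmf (step3 k (r,p) s))"
proof -
  assume k: "k \<ge> 1"
  obtain C M pr where s: "s = (C, M, pr)" by (cases s) auto
  show ?thesis
  proof (cases "r \<in> C")
    case True then show ?thesis using s by (simp add: step3_hit)
  next
    case F: False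
    show ?thesis
    proof (cases "card C < k")
      case True then show ?thesis using s F by (simp add: step3_ins)
    next
      case False
      from step3_else[OF F False k, where M=M and pr=pr and p=p] show ?thesis using s by auto
    qed
  qed
qed

lemma fix_image:
  assumes "bij \<sigma>" "\<forall>x. x \<notin> A \<longrightarrow> \<sigma> x = x"
  shows "\<sigma> ` A = A"
proof
  have inj: "inj \<sigma>" using assms(1) bij_is_inj by auto
  show "\<sigma> ` A \<subseteq> A"
  proof
    fix y assume "y \<in> \<sigma> ` A"
    then obtain a where a: "a \<in> A" "y = \<sigma> a" by auto
    show "y \<in> A"
    proof (rule ccontr)
      assume "y \<notin> A"
      then have "\<sigma> y = y" using assms(2) by auto
      then have "\<sigma> y = \<sigma> a" using a by simp
      then have "y = a" using inj by (simp add: inj_eq)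
      then show False using a \<open>y \<notin> A\<close> by simp
    qed
  qed
  show "A \<subseteq> \<sigma> ` A"
  proof
    fix a assume a: "a \<in> A"
    obtain b where b: "a = \<sigma> b" using assms(1) by (metis bij_def surj_def)
    have "b \<in> A"
    proof (rule ccontr)
      assume "b \<notin> A" then have "\<sigma> b = b" using assms(2) by auto
      then show False using a b \<open>b \<notin> A\<close> by simp
    qed
    then show "a \<in> \<sigma> ` A" using b by auto
  qed
qed

lemma INV_step:
  assumes k: "k \<ge> 1" and di: "DI k M U h" and inv: "INV M U h pr D"
    and sh: "sh_step k (r,p) (M,U,h,pr) = (M2,U2,h2,pr2)"
  shows "INV M2 U2 h2 pr2 (bind_pmf D (step3 k (r,p)))"
proof -
  have D: "finite (set_pmf D)" "\<And>s. s\<in>set_pmf D \<Longrightarrow> good M U h pr s"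
    "\<And>\<sigma>. bij \<sigma> \<Longrightarrow> (\<forall>x. x \<notin> U \<longrightarrow> \<sigma> x = x) \<Longrightarrow> (\<forall>x. pr (\<sigma> x) = pr x) \<Longrightarrow> map_pmf (app \<sigma>) D = D"
    using inv unfolding INV_def by auto
  have f: "finite M" "finite U" "M \<inter> U = {}" "h \<le> card U" "card M + card U - h \<le> k"
    "U \<noteq> {} \<Longrightarrow> card M + card U - h = k" using di unfolding DI_def by auto
  have pr2: "pr2 = pr(r:=p)" using sh by (auto split: if_splits)
  have rU2: "r \<notin> U2" and U2c: "U2 \<subseteq> U \<or> (U2 = M \<and> h = card U)"
  proof -
    have "r \<notin> U2 \<and> (U2 \<subseteq> U \<or> (U2 = M \<and> h = card U))"
    proof (cases "r \<in> M")
      case True then show ?thesis using sh f by auto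
    next
      case c1: False
      show ?thesis
      proof (cases "r \<in> U \<and> h < card U")
        case True then show ?thesis using sh c1 by auto
      next
        case c2: False
        show ?thesis
        proof (cases "card M + card U - h < k")
          case True then have "U = {}" using f by auto
          then show ?thesis using sh c1 c2 True by auto
        next
          case c3: False
          show ?thesis
          proof (cases "h < card U")
            case True then show ?thesis using sh c1 c2 c3 by auto
          next
            case False then show ?thesis using sh c1 c2 c3 f by auto
          qed
        qed
      qed
    qed
    then show "r \<notin> U2" "U2 \<subseteq> U \<or> (U2 = M \<and> h = card U)" by auto
  qed
  have fin: "finite (set_pmf (bind_pmf D (step3 k (r,p))))"
    using D(1) by (simp add: fin_step3[OF k])
  have gd: "\<forall>s'\<in>set_pmf (bind_pmf D (step3 k (r,p))). good M2 U2 h2 pr2 s'"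
  proof
    fix s' assume "s' \<in> set_pmf (bind_pmf D (step3 k (r,p)))"
    then obtain s where s: "s \<in> set_pmf D" "s' \<in> set_pmf (step3 k (r,p) s)" by auto
    show "good M2 U2 h2 pr2 s'" by (rule good_step[OF k di D(2)[OF s(1)] sh s(2)])
  qed
  have sy: "map_pmf (app \<sigma>) (bind_pmf D (step3 k (r,p))) = bind_pmf D (step3 k (r,p))"
    if bj: "bij \<sigma>" and fx: "\<forall>x. x \<notin> U2 \<longrightarrow> \<sigma> x = x" and pp: "\<forall>x. pr2 (\<sigma> x) = pr2 x" for \<sigma>
  proof -
    have inj: "inj \<sigma>" using bj bij_is_inj by auto
    have sr: "\<sigma> r = r" using fx rU2 by auto
    have prs: "pr (\<sigma> x) = pr x" for x
    proof (cases "x = r")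
      case True then show ?thesis using sr by simp
    next
      case False
      then have "\<sigma> x \<noteq> r" using sr inj by (metis inj_eq)
      then show ?thesis using pp[rule_format, of x] False pr2 by simp
    qed
    have sM: "\<sigma> ` M = M"
    proof (cases "U2 \<subseteq> U")
      case True
      then have "\<forall>x\<in>M. \<sigma> x = x" using fx f(3) by auto
      then show ?thesis by simp
    next
      case False
      then have "U2 = M" using U2c by auto
      then show ?thesis using fix_image[OF bj] fx by auto
    qed
    have eq: "map_pmf (app \<sigma>) (step3 k (r,p) s) = step3 k (r,p) (app \<sigma> s)" if s: "s \<in> set_pmf D" for s
    proof -
      obtain C where sC: "s = (C, M, pr)" using D(2)[OF s] unfolding good_def by (cases s) auto
      show ?thesis unfolding sC using step3_equiv[where \<sigma>=\<sigma> and r=r and M=M and pr=pr and k=k and p=p and C=C, OF bj sr sM prs k]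
        by (simp add: app_def sM)
    qed
    have DD: "map_pmf (app \<sigma>) D = D"
    proof (cases "U2 \<subseteq> U")
      case True
      then show ?thesis using D(3)[OF bj] fx prs by auto
    next
      case False
      then have hU: "U2 = M" "h = card U" using U2c by auto
      show ?thesis
      proof (rule map_pmf_idI)
        fix s assume s: "s \<in> set_pmf D"
        obtain C S where sC: "s = (C, M, pr)" and S: "S \<subseteq> U" "card S = h" and C: "C = M \<union> (U - S)"
          using D(2)[OF s] unfolding good_def by (cases s) auto
        have "S = U" using S hU f by (metis card_subset_eq)
        then have "C = M" using C by auto
        then show "app \<sigma> s = s" unfolding sC app_def using sM by simp
      qed
    qed
    have "map_pmf (app \<sigma>) (bind_pmf D (step3 k (r,p))) = bind_pmf D (\<lambda>s. step3 k (r,p) (app \<sigma> s))"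
      unfolding map_bind_pmf by (rule bind_pmf_cong[OF refl]) (rule eq)
    also have "\<dots> = bind_pmf (map_pmf (app \<sigma>) D) (step3 k (r,p))" by (simp add: bind_map_pmf)
    also have "\<dots> = bind_pmf D (step3 k (r,p))" using DD by simp
    finally show ?thesis .
  qed
  show ?thesis unfolding INV_def using fin gd sy by blast
qed


lemma INV_init: "INV {} {} 0 (\<lambda>_. False) (return_pmf ({}, {}, \<lambda>_. False))"
proof -
  have "map_pmf (app \<sigma>) (return_pmf ({}, {}, \<lambda>_. False)) = return_pmf ({}, {}, \<lambda>_. False)" for \<sigma> :: "'a \<Rightarrow> 'a"
    by (simp add: app_def)
  then show ?thesis unfolding INV_def good_def by auto
qed

lemma DI_init: "DI k {} {} 0" unfolding DI_def by simp

lemma fin_mp_step: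
  assumes k: "k \<ge> 1"
  shows "finite (set_pmf (mp_step k (r,p) (C,M,pr,c)))"
proof (cases "r \<in> C")
  case True then show ?thesis by simp
next
  case F: False
  show ?thesis
  proof (cases "card C < k")
    case True then show ?thesis using F by simp
  next
    case False
    define M' where "M' = (if C \<subseteq> M then {} else M)"
    define U where "U = C - M'"
    define E where "E = (if {q\<in>U. pr q} \<noteq> {} then {q\<in>U. pr q} else U)"
    have fin: "finite C" using False k card.infinite by fastforce
    have ne: "C \<noteq> {}" using False k by auto
    have "U \<noteq> {}" unfolding U_def M'_def using ne by auto
    hence E1: "E \<noteq> {}" unfolding E_def by auto
    have "E \<subseteq> C" unfolding E_def U_def by auto
    hence E2: "finite E" using fin finite_subset by blast
    have "mp_step k (r,p) (C,M,pr,c) = map_pmf (\<lambda>q. (insert r (C - {q}), insert r M', pr(r := p), Suc c)) (pmf_of_set E)"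
      using F False unfolding E_def U_def M'_def by (simp add: Let_def)
    then show ?thesis using E1 E2 by simp
  qed
qed

lemma cost_mp_step:
  assumes k: "k \<ge> 1"
  shows "measure_pmf.expectation (mp_step k (r,p) (C,M,pr,c)) (\<lambda>s. real (snd (snd (snd s))))
     = real c + (if r \<in> C then 0 else 1)"
proof (cases "r \<in> C")
  case True then show ?thesis by simp
next
  case F: False
  show ?thesis
  proof (cases "card C < k")
    case True then show ?thesis using F by simp
  next
    case False
    define M' where "M' = (if C \<subseteq> M then {} else M)"
    define U where "U = C - M'"
    define E where "E = (if {q\<in>U. pr q} \<noteq> {} then {q\<in>U. pr q} else U)"
    have "mp_step k (r,p) (C,M,pr,c) = map_pmf (\<lambda>q. (insert r (C - {q}), insert r M', pr(r := p), Suc c)) (pmf_of_set E)"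
      using F False unfolding E_def U_def M'_def by (simp add: Let_def)
    then show ?thesis using F by simp
  qed
qed

lemma cost_bind:
  assumes k: "k \<ge> 1" and fin: "finite (set_pmf D)"
  shows "measure_pmf.expectation (bind_pmf D (mp_step k (r,p))) (\<lambda>s. real (snd (snd (snd s))))
     = measure_pmf.expectation D (\<lambda>s. real (snd (snd (snd s))))
       + measure_pmf.prob (map_pmf prj D) {s. r \<notin> fst s}"
proof -
  let ?c = "\<lambda>s::'a mp_state. real (snd (snd (snd s)))"
  have fs: "\<And>x. x \<in> set_pmf D \<Longrightarrow> finite (set_pmf (mp_step k (r,p) x))"
    using fin_mp_step[OF k] by (metis prod_cases4)
  have "measure_pmf.expectation (bind_pmf D (mp_step k (r,p))) ?c
      = (\<Sum>a\<in>set_pmf D. pmf D a *\<^sub>R measure_pmf.expectation (mp_step k (r,p) a) ?c)"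
    by (rule pmf_expectation_bind[OF fin fs subset_refl])
  also have "\<dots> = (\<Sum>a\<in>set_pmf D. pmf D a *\<^sub>R (?c a + indicator {s. r \<notin> fst s} a))"
  proof (rule sum.cong[OF refl])
    fix a :: "'a mp_state"
    obtain C M pr c where a: "a = (C,M,pr,c)" by (cases a) auto
    show "pmf D a *\<^sub>R measure_pmf.expectation (mp_step k (r,p) a) ?c = pmf D a *\<^sub>R (?c a + indicator {s. r \<notin> fst s} a)"
      unfolding a cost_mp_step[OF k] by (simp add: indicator_def)
  qed
  also have "\<dots> = measure_pmf.expectation D (\<lambda>a. ?c a + indicator {s. r \<notin> fst s} a)"
    by (rule integral_measure_pmf[OF fin, symmetric]) auto
  also have "\<dots> = measure_pmf.expectation D ?c + measure_pmf.expectation D (indicator {s. r \<notin> fst s})"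
    by (rule Bochner_Integration.integral_add) (auto intro: integrable_measure_pmf_finite[OF fin])
  also have "measure_pmf.expectation D (indicator {s. r \<notin> fst s}) = measure_pmf.prob (map_pmf prj D) {s. r \<notin> fst s}"
    by (simp add: prj_def vimage_def)
  finally show ?thesis .
qed

lemma sum_ind_card: "finite X \<Longrightarrow> (\<Sum>y\<in>X. indicator {s. y \<notin> fst s} s) = real (card (X - fst s))"
proof -
  assume X: "finite X"
  have "(\<Sum>y\<in>X. indicator {s. y \<notin> fst s} s) = (\<Sum>y\<in>X. (indicator (- fst s) y :: real))"
    by (rule sum.cong) (auto simp: indicator_def)
  also have "\<dots> = real (\<Sum>y\<in>X. (indicator (- fst s) y :: nat))"
    unfolding of_nat_sum by (rule sum.cong) (auto simp: indicator_def)
  also have "\<dots> = real (card (X \<inter> - fst s))" using sum_indicator_eq_card[OF X] by simp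
  also have "X \<inter> - fst s = X - fst s" by auto
  finally show ?thesis .
qed

lemma marg_gen:
  assumes inv: "INV M U h pr D" and X: "X \<subseteq> U" "finite X" "\<forall>y\<in>X. pr y = b" and x: "x \<in> X"
    and v: "\<forall>s\<in>set_pmf D. card (X - fst s) = v"
  shows "measure_pmf.prob D {s. x \<notin> fst s} = v / card X"
proof -
  have D: "finite (set_pmf D)"
    "\<And>\<sigma>. bij \<sigma> \<Longrightarrow> (\<forall>x. x \<notin> U \<longrightarrow> \<sigma> x = x) \<Longrightarrow> (\<forall>x. pr (\<sigma> x) = pr x) \<Longrightarrow> map_pmf (app \<sigma>) D = D"
    using inv unfolding INV_def by auto
  define P where "P y = measure_pmf.prob D {s. y \<notin> fst s}" for y
  have same: "P y = P x" if y: "y \<in> X" for y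
  proof -
    define \<sigma> where "\<sigma> z = (if z = x then y else if z = y then x else z)" for z
    have inv2: "\<sigma> (\<sigma> z) = z" for z unfolding \<sigma>_def by auto
    have bj: "bij \<sigma>" by (rule o_bij[of \<sigma>]) (auto simp: inv2 fun_eq_iff)
    have fx: "\<forall>z. z \<notin> U \<longrightarrow> \<sigma> z = z" unfolding \<sigma>_def using X x y by auto
    have pp: "\<forall>z. pr (\<sigma> z) = pr z" unfolding \<sigma>_def using X x y by auto
    have DD: "map_pmf (app \<sigma>) D = D" using D(2)[OF bj fx pp] .
    have "P y = measure_pmf.prob (map_pmf (app \<sigma>) D) {s. y \<notin> fst s}" unfolding P_def DD ..
    also have "\<dots> = measure_pmf.prob D {s. y \<notin> \<sigma> ` fst s}" by (simp add: app_def vimage_def)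
    also have "{s. y \<notin> \<sigma> ` fst s} = {s. x \<notin> fst s}"
    proof -
      have "y \<in> \<sigma> ` A \<longleftrightarrow> x \<in> A" for A
        unfolding \<sigma>_def by (auto simp: image_iff)
      then show ?thesis by auto
    qed
    finally show ?thesis unfolding P_def .
  qed
  have "(\<Sum>y\<in>X. P y) = (\<Sum>y\<in>X. measure_pmf.expectation D (indicator {s. y \<notin> fst s}))"
    unfolding P_def by simp
  also have "\<dots> = measure_pmf.expectation D (\<lambda>s. \<Sum>y\<in>X. indicator {s. y \<notin> fst s} s)"
    by (rule Bochner_Integration.integral_sum[where f="\<lambda>y. indicator {s. y \<notin> fst s}", symmetric])
       (auto intro: integrable_measure_pmf_finite[OF D(1)])
  also have "\<dots> = measure_pmf.expectation D (\<lambda>s. real v)"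
    by (rule integral_cong_AE) (auto simp: AE_measure_pmf_iff sum_ind_card[OF X(2)] v)
  also have "\<dots> = real v" by simp
  finally have "(\<Sum>y\<in>X. P y) = real v" .
  moreover have "(\<Sum>y\<in>X. P y) = real (card X) * P x" using same by simp
  moreover have "card X > 0" using X x card_gt_0_iff by blast
  ultimately show ?thesis unfolding P_def by (simp add: field_simps)
qed

lemma card_classes:
  assumes "good M U h pr s" "DI k M U h"
  shows "card ({q\<in>U. pr q} - fst s) = min h (card {q\<in>U. pr q})"
    "card ({q\<in>U. \<not> pr q} - fst s) = h - min h (card {q\<in>U. pr q})"
proof -
  have f: "finite M" "finite U" "M \<inter> U = {}" using assms(2) unfolding DI_def by auto
  obtain S where S: "S \<subseteq> U" "card S = h" "S \<subseteq> {q\<in>U. pr q} \<or> {q\<in>U. pr q} \<subseteq> S"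
    and C: "fst s = M \<union> (U - S)" using assms(1) unfolding good_def by auto
  have e1: "{q\<in>U. pr q} - fst s = {q\<in>U. pr q} \<inter> S" using C f S by auto
  have e0: "{q\<in>U. \<not> pr q} - fst s = S - {q\<in>U. pr q}" using C f S by auto
  have fS: "finite S" using S f finite_subset by blast
  have f1: "finite {q\<in>U. pr q}" using f by simp
  show "card ({q\<in>U. pr q} - fst s) = min h (card {q\<in>U. pr q})"
  proof (cases "S \<subseteq> {q\<in>U. pr q}")
    case True
    then have "card S \<le> card {q\<in>U. pr q}" using f1 card_mono by blast
    then show ?thesis unfolding e1 using True S by (simp add: Int_absorb1)
  next
    case False
    then have T: "{q\<in>U. pr q} \<subseteq> S" using S by auto
    then have "card {q\<in>U. pr q} \<le> card S" using fS card_mono by blast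
    then show ?thesis unfolding e1 using T S by (simp add: Int_absorb2)
  qed
  show "card ({q\<in>U. \<not> pr q} - fst s) = h - min h (card {q\<in>U. pr q})"
  proof (cases "S \<subseteq> {q\<in>U. pr q}")
    case True
    then have "card S \<le> card {q\<in>U. pr q}" using f1 card_mono by blast
    moreover have em: "S - {q\<in>U. pr q} = {}" using True by auto
    ultimately show ?thesis unfolding e0 em using S by simp
  next
    case False
    then have T: "{q\<in>U. pr q} \<subseteq> S" using S by auto
    then have "card {q\<in>U. pr q} \<le> card S" using fS card_mono by blast
    moreover have "card (S - {q\<in>U. pr q}) = card S - card {q\<in>U. pr q}"
      using T f1 by (simp add: card_Diff_subset)
    ultimately show ?thesis unfolding e0 using S by simp
  qed
qed

lemma fault_marked:
  assumes "INV M U h pr D" "r \<in> M"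
  shows "measure_pmf.prob D {s. r \<notin> fst s} = 0"
proof -
  have "\<forall>s\<in>set_pmf D. r \<in> fst s" using assms unfolding INV_def good_def by auto
  then show ?thesis by (subst measure_pmf_zero_iff) auto
qed

lemma fault_one:
  assumes "INV M U h pr D" "DI k M U h" "r \<in> U" "pr r"
  shows "measure_pmf.prob D {s. r \<notin> fst s} = min h (card {q\<in>U. pr q}) / card {q\<in>U. pr q}"
proof -
  have "finite U" using assms(2) unfolding DI_def by auto
  show ?thesis
    by (rule marg_gen[OF assms(1), where b=True]) 
       (use assms \<open>finite U\<close> card_classes(1)[OF _ assms(2)] in \<open>auto simp: INV_def\<close>)
qed

lemma fault_zero:
  assumes "INV M U h pr D" "DI k M U h" "r \<in> U" "\<not> pr r"
  shows "measure_pmf.prob D {s. r \<notin> fst s} = (h - min h (card {q\<in>U. pr q})) / card {q\<in>U. \<not> pr q}"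
proof -
  have "finite U" using assms(2) unfolding DI_def by auto
  show ?thesis
    by (rule marg_gen[OF assms(1), where b=False]) 
       (use assms \<open>finite U\<close> card_classes(2)[OF _ assms(2)] in \<open>auto simp: INV_def\<close>)
qed


definition runp :: "nat \<Rightarrow> 'a list \<Rightarrow> bool list \<Rightarrow> nat \<Rightarrow> 'a mp_state pmf" where
  "runp k rs ps i = mp_run k (take i rs) (take i ps)"

definition shs :: "nat \<Rightarrow> 'a list \<Rightarrow> bool list \<Rightarrow> nat \<Rightarrow> 'a set \<times> 'a set \<times> nat \<times> ('a \<Rightarrow> bool)" where
  "shs k rs ps i = foldl (\<lambda>s rp. sh_step k rp s) ({}, {}, 0, \<lambda>_. False) (zip (take i rs) (take i ps))"

definition fp :: "nat \<Rightarrow> 'a list \<Rightarrow> bool list \<Rightarrow> nat \<Rightarrow> real" where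
  "fp k rs ps i = measure_pmf.prob (map_pmf prj (runp k rs ps i)) {s. rs ! i \<notin> fst s}"

lemma zip_take_Suc:
  "i < length rs \<Longrightarrow> length ps = length rs \<Longrightarrow>
   zip (take (Suc i) rs) (take (Suc i) ps) = zip (take i rs) (take i ps) @ [(rs!i, ps!i)]"
  by (simp add: take_Suc_conv_app_nth)

lemma runp_Suc:
  "i < length rs \<Longrightarrow> length ps = length rs \<Longrightarrow>
   runp k rs ps (Suc i) = bind_pmf (runp k rs ps i) (mp_step k (rs!i, ps!i))"
  unfolding runp_def mp_run_def by (simp add: zip_take_Suc)

lemma runp_0: "runp k rs ps 0 = return_pmf ({}, {}, \<lambda>_. False, 0)"
  unfolding runp_def mp_run_def by simp

lemma shs_Suc:
  "i < length rs \<Longrightarrow> length ps = length rs \<Longrightarrow>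
   shs k rs ps (Suc i) = sh_step k (rs!i, ps!i) (shs k rs ps i)"
  unfolding shs_def by (simp add: zip_take_Suc)

lemma shs_0: "shs k rs ps 0 = ({}, {}, 0, \<lambda>_. False)"
  unfolding shs_def by simp

lemma prj_simp[simp]: "prj (C,M,pr,c) = (C,M,pr)" by (simp add: prj_def)

lemma prj_bind:
  "map_pmf prj (bind_pmf D (mp_step k (r,p))) = bind_pmf (map_pmf prj D) (step3 k (r,p))"
proof -
  have "map_pmf prj (bind_pmf D (mp_step k (r,p))) = bind_pmf D (\<lambda>s. map_pmf prj (mp_step k (r,p) s))"
    by (simp add: map_bind_pmf)
  also have "\<dots> = bind_pmf D (\<lambda>s. step3 k (r,p) (prj s))"
  proof (rule bind_pmf_cong[OF refl])
    fix s :: "'a mp_state"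
    obtain C M pr c where "s = (C,M,pr,c)" by (cases s) auto
    then show "map_pmf prj (mp_step k (r,p) s) = step3 k (r,p) (prj s)"
      by (simp only: prj_step prj_simp)
  qed
  also have "\<dots> = bind_pmf (map_pmf prj D) (step3 k (r,p))" by (simp add: bind_map_pmf)
  finally show ?thesis .
qed

lemma fin_runp:
  assumes "k \<ge> 1" "length ps = length rs" "i \<le> length rs"
  shows "finite (set_pmf (runp k rs ps i))"
  using assms(3)
proof (induction i)
  case 0 then show ?case by (simp add: runp_0)
next
  case (Suc i)
  have fs: "\<And>x. finite (set_pmf (mp_step k (rs!i, ps!i) x))"
    using fin_mp_step[OF assms(1)] by (metis prod_cases4)
  show ?case using Suc fs by (simp add: runp_Suc assms(2))
qed

lemma inv_all:
  assumes "k \<ge> 1" "length ps = length rs" "i \<le> length rs"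
  shows "DI k (fst (shs k rs ps i)) (fst (snd (shs k rs ps i))) (fst (snd (snd (shs k rs ps i))))
    \<and> INV (fst (shs k rs ps i)) (fst (snd (shs k rs ps i))) (fst (snd (snd (shs k rs ps i))))
          (snd (snd (snd (shs k rs ps i)))) (map_pmf prj (runp k rs ps i))"
  using assms(3)
proof (induction i)
  case 0
  have "map_pmf prj (runp k rs ps 0) = return_pmf ({}, {}, \<lambda>_. False)" by (simp add: runp_0)
  then show ?case using INV_init[where 'a='a] DI_init[of k] by (simp add: shs_0)
next
  case (Suc i)
  then have IH: "DI k (fst (shs k rs ps i)) (fst (snd (shs k rs ps i))) (fst (snd (snd (shs k rs ps i))))
    \<and> INV (fst (shs k rs ps i)) (fst (snd (shs k rs ps i))) (fst (snd (snd (shs k rs ps i))))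
          (snd (snd (snd (shs k rs ps i)))) (map_pmf prj (runp k rs ps i))" by simp
  obtain M U h pr where e: "shs k rs ps i = (M,U,h,pr)" by (cases "shs k rs ps i") auto
  obtain M2 U2 h2 pr2 where e2: "sh_step k (rs!i, ps!i) (M,U,h,pr) = (M2,U2,h2,pr2)"
    by (cases "sh_step k (rs!i, ps!i) (M,U,h,pr)") auto
  have i: "i < length rs" using Suc by simp
  have "DI k M2 U2 h2" using DI_step[OF assms(1) _ e2] IH e by simp
  moreover have "INV M2 U2 h2 pr2 (bind_pmf (map_pmf prj (runp k rs ps i)) (step3 k (rs!i, ps!i)))"
    using INV_step[OF assms(1) _ _ e2] IH e by simp
  moreover have "shs k rs ps (Suc i) = (M2,U2,h2,pr2)" by (simp only: shs_Suc[OF i assms(2)] e e2)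
  moreover have "map_pmf prj (runp k rs ps (Suc i)) = bind_pmf (map_pmf prj (runp k rs ps i)) (step3 k (rs!i, ps!i))"
    by (simp only: runp_Suc[OF i assms(2)] prj_bind)
  ultimately show ?case by simp
qed

lemma exp_prefix:
  assumes "k \<ge> 1" "length ps = length rs" "i \<le> length rs"
  shows "measure_pmf.expectation (runp k rs ps i) (\<lambda>s. real (snd (snd (snd s)))) = (\<Sum>t<i. fp k rs ps t)"
  using assms(3)
proof (induction i)
  case 0 then show ?case by (simp add: runp_0)
next
  case (Suc i)
  have i: "i < length rs" using Suc by simp
  have "measure_pmf.expectation (runp k rs ps (Suc i)) (\<lambda>s. real (snd (snd (snd s))))
     = measure_pmf.expectation (runp k rs ps i) (\<lambda>s. real (snd (snd (snd s)))) + fp k rs ps i"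
    unfolding runp_Suc[OF i assms(2)] fp_def
    by (rule cost_bind[OF assms(1) fin_runp[OF assms(1,2)]]) (use i in simp)
  then show ?case using Suc by simp
qed

lemma exp_cost:
  assumes "k \<ge> 1" "length ps = length rs"
  shows "mp_expected_cost k rs ps = (\<Sum>t<length rs. fp k rs ps t)"
proof -
  have "runp k rs ps (length rs) = mp_run k rs ps" unfolding runp_def using assms(2) by simp
  then show ?thesis using exp_prefix[OF assms order_refl] unfolding mp_expected_cost_def by simp
qed

lemma pr_shs_Suc:
  assumes "i < length rs" "length ps = length rs"
  shows "snd (snd (snd (shs k rs ps (Suc i)))) = (snd (snd (snd (shs k rs ps i))))(rs!i := ps!i)"
proof -
  obtain M U h pr where e: "shs k rs ps i = (M,U,h,pr)" by (cases "shs k rs ps i") auto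
  show ?thesis unfolding shs_Suc[OF assms] e by simp
qed


definition seg :: "'a list \<Rightarrow> nat \<Rightarrow> nat \<Rightarrow> 'a set" where
  "seg xs a b = (\<lambda>t. xs ! t) ` {a..<b}"

lemma seg_empty[simp]: "seg xs a a = {}" by (simp add: seg_def)

lemma seg_Suc: "a \<le> b \<Longrightarrow> seg xs a (Suc b) = insert (xs ! b) (seg xs a b)"
  unfolding seg_def by (auto simp: atLeastLessThanSuc)

lemma seg_split: "a \<le> b \<Longrightarrow> b \<le> c \<Longrightarrow> seg xs a c = seg xs a b \<union> seg xs b c"
  unfolding seg_def by (metis image_Un ivl_disj_un_two(3))

lemma finite_seg[simp]: "finite (seg xs a b)" by (simp add: seg_def)

lemma set_take_drop:
  assumes "b \<le> length rs" "a \<le> b"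
  shows "set (take (b - a) (drop a rs)) = seg rs a b"
proof -
  have "take (b - a) (drop a rs) = map (\<lambda>t. rs ! t) [a..<b]"
    by (rule nth_equalityI) (use assms in auto)
  then show ?thesis unfolding seg_def by simp
qed

lemma ns_facts:
  assumes x: "x < length rs"
  shows "x < next_start k rs x" "next_start k rs x \<le> length rs"
    "\<And>t. x < t \<Longrightarrow> t < next_start k rs x \<Longrightarrow> card (set (take (Suc t - x) (drop x rs))) \<le> k"
    "next_start k rs x < length rs \<Longrightarrow> k < card (set (take (Suc (next_start k rs x) - x) (drop x rs)))"
proof -
  define Q where "Q t \<longleftrightarrow> x < t \<and> (t = length rs \<or> k < card (set (take (Suc t - x) (drop x rs))))" for t
  have ns: "next_start k rs x = (LEAST t. Q t)" unfolding next_start_def Q_def using x by simp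
  have Qn: "Q (length rs)" unfolding Q_def using x by simp
  have QL: "Q (LEAST t. Q t)" by (rule LeastI[of Q, OF Qn])
  show "x < next_start k rs x" using QL unfolding ns Q_def by simp
  show "next_start k rs x \<le> length rs" unfolding ns by (rule Least_le[of Q, OF Qn])
  show "card (set (take (Suc t - x) (drop x rs))) \<le> k" if "x < t" "t < next_start k rs x" for t
    using not_less_Least[of t Q] that unfolding ns Q_def by auto
  show "k < card (set (take (Suc (next_start k rs x) - x) (drop x rs)))" if "next_start k rs x < length rs"
    using QL that unfolding ns Q_def by auto
qed

lemma ns_ge: "length rs \<le> x \<Longrightarrow> next_start k rs x = length rs"
  unfolding next_start_def by simp

lemma st_Suc: "phase_start k rs (Suc j) = next_start k rs (phase_start k rs j)"
  unfolding phase_start_def by simp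

lemma st_0: "phase_start k rs 0 = 0" unfolding phase_start_def by simp

lemma st_le: "phase_start k rs j \<le> length rs"
proof (induction j)
  case 0 then show ?case by (simp add: st_0)
next
  case (Suc j)
  then show ?case unfolding st_Suc
    by (cases "phase_start k rs j < length rs") (auto simp: ns_facts(2) ns_ge)
qed

lemma st_less: "phase_start k rs j < length rs \<Longrightarrow> phase_start k rs j < phase_start k rs (Suc j)"
  unfolding st_Suc by (rule ns_facts(1))

lemma st_mono_Suc: "phase_start k rs j \<le> phase_start k rs (Suc j)"
  using st_less[of k rs j] st_le[of k rs j] st_le[of k rs "Suc j"] unfolding st_Suc
  by (cases "phase_start k rs j < length rs") (auto simp: ns_ge)

lemma st_mono: "j \<le> j' \<Longrightarrow> phase_start k rs j \<le> phase_start k rs j'"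
  by (rule lift_Suc_mono_le[of "phase_start k rs"]) (auto simp: st_mono_Suc)

lemma st_ge: "j \<le> phase_start k rs j \<or> phase_start k rs j = length rs"
proof (induction j)
  case 0 then show ?case by simp
next
  case (Suc j)
  show ?case
  proof (cases "phase_start k rs j < length rs")
    case True
    then show ?thesis using Suc st_less[OF True] by auto
  next
    case False
    then have "phase_start k rs j = length rs" using st_le[of k rs j] by simp
    then show ?thesis unfolding st_Suc by (simp add: ns_ge)
  qed
qed

lemma st_n: "phase_start k rs (length rs) = length rs"
  using st_ge[of "length rs" k rs] st_le[of k rs "length rs"] by auto

lemma st_less_j: "phase_start k rs j < length rs \<Longrightarrow> j < length rs"
  using st_ge[of j k rs] by auto

lemma card_phase:
  assumes k: "k \<ge> 1" and lt: "phase_start k rs j \<le> i" "i < phase_start k rs (Suc j)"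
  shows "card (seg rs (phase_start k rs j) (Suc i)) \<le> k"
proof -
  let ?s = "phase_start k rs j"
  have sn: "?s < length rs" using lt st_le[of k rs "Suc j"] by simp
  have i: "Suc i \<le> length rs" using lt st_le[of k rs "Suc j"] by simp
  show ?thesis
  proof (cases "i = ?s")
    case True
    then show ?thesis using k by (simp add: seg_Suc)
  next
    case False
    then have "?s < i" using lt by simp
    from ns_facts(3)[OF sn this] lt(2)
    have "card (set (take (Suc i - ?s) (drop ?s rs))) \<le> k" unfolding st_Suc by simp
    then show ?thesis using set_take_drop[OF i] lt by simp
  qed
qed

definition P :: "nat \<Rightarrow> 'a list \<Rightarrow> nat \<Rightarrow> 'a set" where
  "P k rs j = seg rs (phase_start k rs j) (phase_start k rs (Suc j))"

lemma card_P_le: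
  assumes k: "k \<ge> 1"
  shows "card (P k rs j) \<le> k"
proof (cases "phase_start k rs j < phase_start k rs (Suc j)")
  case True
  have "card (seg rs (phase_start k rs j) (Suc (phase_start k rs (Suc j) - 1))) \<le> k"
    by (rule card_phase[OF k]) (use True in auto)
  then show ?thesis unfolding P_def using True by simp
next
  case False
  then show ?thesis unfolding P_def seg_def by simp
qed

lemma full_phase:
  assumes k: "k \<ge> 1" and lt: "phase_start k rs (Suc j) < length rs"
  shows "rs ! phase_start k rs (Suc j) \<notin> P k rs j" "card (P k rs j) = k"
proof -
  let ?s = "phase_start k rs j" and ?t = "phase_start k rs (Suc j)"
  have sn: "?s < length rs" using lt st_mono_Suc[of k rs j] by simp
  have "k < card (set (take (Suc ?t - ?s) (drop ?s rs)))"
    using ns_facts(4)[OF sn] lt unfolding st_Suc by simp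
  moreover have "set (take (Suc ?t - ?s) (drop ?s rs)) = seg rs ?s (Suc ?t)"
    using set_take_drop[of "Suc ?t" rs ?s] lt st_mono_Suc[of k rs j] by simp
  moreover have "seg rs ?s (Suc ?t) = insert (rs ! ?t) (P k rs j)"
    unfolding P_def using st_mono_Suc[of k rs j] by (simp add: seg_Suc)
  ultimately have c: "k < card (insert (rs ! ?t) (P k rs j))" by simp
  have le: "card (P k rs j) \<le> k" by (rule card_P_le[OF k])
  have fin: "finite (P k rs j)" by (simp add: P_def)
  show nm: "rs ! ?t \<notin> P k rs j" using c le by (metis insert_absorb not_le)
  show "card (P k rs j) = k" using c le fin nm by simp
qed

lemma phase_exists:
  assumes "i < length rs"
  shows "\<exists>j. phase_start k rs j \<le> i \<and> i < phase_start k rs (Suc j)"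
proof -
  have ex: "\<exists>j. i < phase_start k rs j" using st_n[of k rs] assms by (intro exI[of _ "length rs"]) simp
  define j where "j = (LEAST j. i < phase_start k rs j)"
  have j1: "i < phase_start k rs j" unfolding j_def by (rule LeastI_ex[OF ex])
  have j0: "j \<noteq> 0"
  proof
    assume "j = 0" then show False using j1 by (simp add: st_0)
  qed
  then obtain j' where j': "j = Suc j'" by (cases j) auto
  have "\<not> i < phase_start k rs j'" unfolding j_def using j' not_less_Least j_def by (metis lessI)
  then show ?thesis using j1 j' by (intro exI[of _ j']) simp
qed

lemma phase_unique:
  assumes "phase_start k rs j \<le> i" "i < phase_start k rs (Suc j)"
    "phase_start k rs j' \<le> i" "i < phase_start k rs (Suc j')"
  shows "j = j'"
proof (rule ccontr)
  assume "j \<noteq> j'"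
  then have "Suc j \<le> j' \<or> Suc j' \<le> j" by auto
  then show False
    using st_mono[of "Suc j" j' k rs] st_mono[of "Suc j'" j k rs] assms by auto
qed


lemma shape0:
  assumes k1: "k \<ge> 1" and len: "length ps = length rs" and i: "i \<le> phase_start k rs (Suc 0)"
  shows "fst (shs k rs ps i) = seg rs 0 i \<and> fst (snd (shs k rs ps i)) = {} \<and> fst (snd (snd (shs k rs ps i))) = 0"
  using i
proof (induction i)
  case 0 then show ?case by (simp add: shs_0)
next
  case (Suc i)
  have ilt: "i < phase_start k rs (Suc 0)" using Suc by simp
  have il: "i < length rs" using ilt st_le[of k rs "Suc 0"] by simp
  obtain pr where e: "shs k rs ps i = (seg rs 0 i, {}, 0, pr)"
    using Suc by (cases "shs k rs ps i") auto
  have c: "card (seg rs 0 (Suc i)) \<le> k" using card_phase[OF k1, where rs=rs and j=0 and i=i] ilt by (simp add: st_0)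
  have ss: "seg rs 0 (Suc i) = insert (rs ! i) (seg rs 0 i)" by (simp add: seg_Suc)
  show ?case
  proof (cases "rs ! i \<in> seg rs 0 i")
    case True
    then show ?thesis unfolding shs_Suc[OF il len] e ss by (simp add: insert_absorb)
  next
    case False
    then have "card (seg rs 0 i) < k" using c ss by simp
    then show ?thesis unfolding shs_Suc[OF il len] e ss using False by simp
  qed
qed

lemma card_diff_sym:
  assumes "finite A" "finite B" "card A = card B"
  shows "card (A - B) = card (B - A)"
proof -
  have "card (A - B) = card A - card (A \<inter> B)" using assms by (simp add: card_Diff_subset_Int)
  moreover have "card (B - A) = card B - card (B \<inter> A)" using assms by (simp add: card_Diff_subset_Int)
  ultimately show ?thesis using assms by (simp add: Int_commute)
qed

lemma phase_from_pre:
  assumes k1: "k \<ge> 1" and len: "length ps = length rs" and j: "1 \<le> j" "phase_start k rs j < length rs"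
    and pre: "fst (shs k rs ps (phase_start k rs j)) = P k rs (j - 1)"
      "fst (snd (snd (shs k rs ps (phase_start k rs j)))) = card (fst (snd (shs k rs ps (phase_start k rs j))))"
  shows "\<forall>i. phase_start k rs j < i \<and> i \<le> phase_start k rs (Suc j) \<longrightarrow>
     fst (shs k rs ps i) = seg rs (phase_start k rs j) i \<and>
     fst (snd (shs k rs ps i)) = P k rs (j - 1) - seg rs (phase_start k rs j) i \<and>
     fst (snd (snd (shs k rs ps i))) = card (seg rs (phase_start k rs j) i - P k rs (j - 1))"
proof -
  let ?s = "phase_start k rs j" and ?t = "phase_start k rs (Suc j)" and ?O = "P k rs (j - 1)"
  have jj: "Suc (j - 1) = j" using j by simp
  have rO: "rs ! ?s \<notin> ?O" and cO: "card ?O = k"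
    using full_phase[OF k1, of rs "j - 1"] j jj by auto
  have finO: "finite ?O" by (simp add: P_def)
  obtain U h pr where e: "shs k rs ps ?s = (?O, U, h, pr)" and hU: "h = card U"
    using pre by (cases "shs k rs ps ?s") auto
  have st: "?s < ?t" using st_less j by blast
  have b0: "shs k rs ps (Suc ?s) = ({rs ! ?s}, ?O, 1, pr(rs ! ?s := ps ! ?s))"
    unfolding shs_Suc[OF j(2) len] e using rO cO hU k1 by simp
  show ?thesis
  proof (intro allI impI)
    fix i assume "?s < i \<and> i \<le> ?t"
    then have i: "Suc ?s \<le> i" "i \<le> ?t" by auto
    show "fst (shs k rs ps i) = seg rs ?s i \<and> fst (snd (shs k rs ps i)) = ?O - seg rs ?s i \<and>
       fst (snd (snd (shs k rs ps i))) = card (seg rs ?s i - ?O)"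
      using i
    proof (induction i rule: dec_induct)
      case base
      have "seg rs ?s (Suc ?s) = {rs ! ?s}" by (simp add: seg_Suc)
      moreover have "{rs ! ?s} - ?O = {rs ! ?s}" using rO by auto
      moreover have "?O - {rs ! ?s} = ?O" using rO by auto
      ultimately show ?case using b0 by simp
    next
      case (step i)
      have il: "i < length rs" using step st_le[of k rs "Suc j"] by simp
      have IH: "fst (shs k rs ps i) = seg rs ?s i \<and> fst (snd (shs k rs ps i)) = ?O - seg rs ?s i \<and>
         fst (snd (snd (shs k rs ps i))) = card (seg rs ?s i - ?O)" using step by simp
      obtain pr where e: "shs k rs ps i = (seg rs ?s i, ?O - seg rs ?s i, card (seg rs ?s i - ?O), pr)"
        using IH by (cases "shs k rs ps i") auto
      let ?Mk = "seg rs ?s i" and ?r = "rs ! i"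
      have ss: "seg rs ?s (Suc i) = insert ?r ?Mk" using step by (simp add: seg_Suc)
      have c: "card (seg rs ?s (Suc i)) \<le> k" using card_phase[OF k1, where rs=rs and j=j and i=i] step by simp
      define c0 where "c0 = card (?O \<inter> ?Mk)"
      have cU: "card (?O - ?Mk) = k - c0" unfolding c0_def using cO finO by (simp add: card_Diff_subset_Int)
      have ch: "card (?Mk - ?O) = card ?Mk - c0" unfolding c0_def by (simp add: card_Diff_subset_Int Int_commute)
      have c0le: "c0 \<le> card ?Mk" "c0 \<le> k" unfolding c0_def using cO finO
        by (auto intro: card_mono simp del: Int_iff) (metis Int_lower1 card_mono)
      show ?case
      proof (cases "?r \<in> ?Mk")
        case True
        then show ?thesis unfolding shs_Suc[OF il len] e ss by (simp add: insert_absorb)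
      next
        case F: False
        have cM: "card ?Mk < k" using c ss F by simp
        show ?thesis
        proof (cases "?r \<in> ?O")
          case True
          have hl: "card (?Mk - ?O) < card (?O - ?Mk)" using cU ch cM c0le by linarith
          have e1: "?O - ?Mk - {?r} = ?O - insert ?r ?Mk" by auto
          have e2: "insert ?r ?Mk - ?O = ?Mk - ?O" using True by auto
          show ?thesis unfolding shs_Suc[OF il len] e ss using F True hl e1 e2 by simp
        next
          case False
          have hl: "card (?Mk - ?O) < card (?O - ?Mk)" using cU ch cM c0le by linarith
          have k3: "\<not> card ?Mk + card (?O - ?Mk) - card (?Mk - ?O) < k" using cU ch c0le by linarith
          have e2: "card (insert ?r ?Mk - ?O) = Suc (card (?Mk - ?O))"
            using False F by (simp add: insert_Diff_if)
          have e1: "?O - insert ?r ?Mk = ?O - ?Mk" using False by auto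
          show ?thesis unfolding shs_Suc[OF il len] e ss using F False hl k3 e1 e2 by simp
        qed
      qed
    qed
  qed
qed

lemma shape_phase:
  assumes k1: "k \<ge> 1" and len: "length ps = length rs"
  shows "1 \<le> j \<Longrightarrow> phase_start k rs j < length rs \<Longrightarrow>
     \<forall>i. phase_start k rs j < i \<and> i \<le> phase_start k rs (Suc j) \<longrightarrow>
     fst (shs k rs ps i) = seg rs (phase_start k rs j) i \<and>
     fst (snd (shs k rs ps i)) = P k rs (j - 1) - seg rs (phase_start k rs j) i \<and>
     fst (snd (snd (shs k rs ps i))) = card (seg rs (phase_start k rs j) i - P k rs (j - 1))"
proof (induction j)
  case 0 then show ?case by simp
next
  case (Suc j)
  show ?case
  proof (cases "j = 0")
    case True
    have "fst (shs k rs ps (phase_start k rs (Suc 0))) = seg rs 0 (phase_start k rs (Suc 0)) \<and>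
       fst (snd (shs k rs ps (phase_start k rs (Suc 0)))) = {} \<and>
       fst (snd (snd (shs k rs ps (phase_start k rs (Suc 0))))) = 0"
      by (rule shape0[OF k1 len order_refl])
    moreover have "P k rs 0 = seg rs 0 (phase_start k rs (Suc 0))" unfolding P_def by (simp add: st_0)
    ultimately show ?thesis using phase_from_pre[OF k1 len, of "Suc j"] Suc.prems True by simp
  next
    case False
    have sj: "phase_start k rs j < length rs"
      using Suc.prems st_mono_Suc[of k rs j] by simp
    have lt: "phase_start k rs j < phase_start k rs (Suc j)" using st_less[OF sj] .
    have IH: "\<forall>i. phase_start k rs j < i \<and> i \<le> phase_start k rs (Suc j) \<longrightarrow>
     fst (shs k rs ps i) = seg rs (phase_start k rs j) i \<and>
     fst (snd (shs k rs ps i)) = P k rs (j - 1) - seg rs (phase_start k rs j) i \<and>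
     fst (snd (snd (shs k rs ps i))) = card (seg rs (phase_start k rs j) i - P k rs (j - 1))"
      using Suc.IH False sj by simp
    then have A: "fst (shs k rs ps (phase_start k rs (Suc j))) = P k rs j"
      "fst (snd (shs k rs ps (phase_start k rs (Suc j)))) = P k rs (j - 1) - P k rs j"
      "fst (snd (snd (shs k rs ps (phase_start k rs (Suc j))))) = card (P k rs j - P k rs (j - 1))"
      using lt unfolding P_def by auto
    have jj: "Suc (j - 1) = j" using False by simp
    have c1: "card (P k rs j) = k" using full_phase(2)[OF k1, of rs j] Suc.prems by simp
    have c2: "card (P k rs (j - 1)) = k" using full_phase(2)[OF k1, of rs "j - 1"] sj jj by simp
    have f1: "finite (P k rs j)" "finite (P k rs (j - 1))" by (simp_all add: P_def)
    have "card (P k rs j - P k rs (j - 1)) = card (P k rs (j - 1) - P k rs j)"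
      using card_diff_sym[OF f1] c1 c2 by simp
    then show ?thesis using phase_from_pre[OF k1 len, of "Suc j"] Suc.prems A by simp
  qed
qed


fun Gs :: "nat \<Rightarrow> nat \<Rightarrow> real" where
  "Gs l 0 = 0"
| "Gs l (Suc w) = Gs l w + min 1 (real l / real (Suc w))"

lemma H_Suc: "H (Suc w) = H w + 1 / real (Suc w)"
  unfolding H_def by simp

lemma H_0: "H 0 = 0" unfolding H_def by simp

lemma H_nonneg: "H w \<ge> 0" unfolding H_def by (auto intro: sum_nonneg)

lemma H_mono: "a \<le> b \<Longrightarrow> H a \<le> H b"
  unfolding H_def by (rule sum_mono2) auto

lemma Gs_nonneg: "Gs l w \<ge> 0"
  by (induction w) auto

lemma key_ln: "x > 0 \<Longrightarrow> 1 / (x + 1) \<le> ln (x + 1) - ln (x::real)"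
proof -
  assume x: "x > 0"
  have "ln (x / (x + 1)) \<le> x / (x + 1) - 1" using x by (intro ln_le_minus_one) auto
  moreover have "ln (x / (x + 1)) = ln x - ln (x + 1)" using x by (simp add: ln_div)
  moreover have "x / (x + 1) - 1 = - 1 / (x + 1)" using x by (simp add: field_simps)
  ultimately show ?thesis by (simp add: field_simps)
qed

lemma Gs_bound_aux:
  assumes l: "l \<ge> 1"
  shows "Gs l e \<le> (if e \<le> l then real e else real l + real l * (ln (real e) - ln (real l)))"
proof (induction e)
  case 0 then show ?case by simp
next
  case (Suc e)
  show ?case
  proof (cases "Suc e \<le> l")
    case True
    then have "min 1 (real l / real (Suc e)) = 1" by (simp add: field_simps)
    then show ?thesis using Suc True by simp
  next
    case False
    note F = False
    have m: "min 1 (real l / real (Suc e)) \<le> real l / real (Suc e)" by simp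
    show ?thesis
    proof (cases "e \<le> l")
      case True
      then have el: "e = l" using False by simp
      have "1 / (real l + 1) \<le> ln (real l + 1) - ln (real l)" using l by (intro key_ln) auto
      then have "real l * (1 / (real l + 1)) \<le> real l * (ln (real l + 1) - ln (real l))"
        by (intro mult_left_mono) auto
      moreover have "real l / real (Suc e) = real l * (1 / (real l + 1))" using el by simp
      moreover have "real (Suc e) = real l + 1" using el by simp
      ultimately have "real l / real (Suc e) \<le> real l * (ln (real (Suc e)) - ln (real l))"
        by (simp add: add.commute)
      then show ?thesis using Suc True F m el by auto
    next
      case False
      have "1 / (real e + 1) \<le> ln (real e + 1) - ln (real e)" using False l by (intro key_ln) auto
      then have "real l * (1 / (real e + 1)) \<le> real l * (ln (real e + 1) - ln (real e))"
        by (intro mult_left_mono) auto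
      then have "real l / real (Suc e) \<le> real l * (ln (real (Suc e)) - ln (real e))"
        by (simp add: add.commute)
      then show ?thesis using Suc False F m by (auto simp: algebra_simps)
    qed
  qed
qed

lemma Gs_bound:
  assumes l: "l \<ge> 1"
  shows "Gs l e \<le> real l + real l * ln (1 + real e / real l)"
proof -
  have lp: "real l > 0" using l by simp
  have ln0: "0 \<le> ln (1 + real e / real l)" using lp by simp
  show ?thesis
  proof (cases "e \<le> l")
    case True
    have a: "Gs l e \<le> real e" using Gs_bound_aux[OF l, of e] True by simp
    have b: "real e \<le> real l" using True by simp
    have c: "0 \<le> real l * ln (1 + real e / real l)" using ln0 lp by simp
    show ?thesis using a b c by linarith
  next
    case False
    then have ep: "real e > 0" by simp
    have "ln (real e) - ln (real l) = ln (real e / real l)" using ep lp by (simp add: ln_div)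
    also have "\<dots> \<le> ln (1 + real e / real l)" using ep lp by (intro ln_mono) auto
    finally have "real l * (ln (real e) - ln (real l)) \<le> real l * ln (1 + real e / real l)"
      using lp by (intro mult_left_mono) auto
    then show ?thesis using Gs_bound_aux[OF l, of e] False by simp
  qed
qed

definition pri :: "nat \<Rightarrow> 'a list \<Rightarrow> bool list \<Rightarrow> nat \<Rightarrow> 'a \<Rightarrow> bool" where
  "pri k rs ps i = snd (snd (snd (shs k rs ps i)))"

lemma pr_keep:
  assumes len: "length ps = length rs" and ab: "a \<le> b" "b \<le> length rs" and q: "q \<notin> seg rs a b"
  shows "pri k rs ps b q = pri k rs ps a q"
  using ab q
proof (induction b rule: dec_induct)
  case base then show ?case by simp
next
  case (step b)
  have bl: "b < length rs" using step by simp
  have "q \<noteq> rs ! b" using step by (simp add: seg_Suc)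
  moreover have "q \<notin> seg rs a b" using step by (simp add: seg_Suc)
  ultimately show ?case using step pr_shs_Suc[OF bl len] unfolding pri_def by simp
qed

lemma pr_last:
  assumes len: "length ps = length rs" and tb: "t < b" "b \<le> length rs" and q: "rs ! t = q"
    and last: "\<forall>t'. t < t' \<and> t' < b \<longrightarrow> rs ! t' \<noteq> q"
  shows "pri k rs ps b q = ps ! t"
proof -
  have tl: "t < length rs" using tb by simp
  have "pri k rs ps (Suc t) q = ps ! t" using pr_shs_Suc[OF tl len] q unfolding pri_def by simp
  moreover have "q \<notin> seg rs (Suc t) b" unfolding seg_def using last q by (auto simp: Suc_le_eq)
  ultimately show ?thesis using pr_keep[OF len, of "Suc t" b q k] tb by simp
qed


definition ell :: "nat \<Rightarrow> 'a list \<Rightarrow> nat \<Rightarrow> nat" where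
  "ell k rs j = card (P k rs j - P k rs (j - 1))"
definition piv :: "nat \<Rightarrow> 'a list \<Rightarrow> bool list \<Rightarrow> nat \<Rightarrow> 'a \<Rightarrow> bool" where
  "piv k rs ps j = pri k rs ps (phase_start k rs j)"
definition E1 :: "nat \<Rightarrow> 'a list \<Rightarrow> bool list \<Rightarrow> nat \<Rightarrow> nat" where
  "E1 k rs ps j = card {q \<in> P k rs (j - 1) \<inter> P k rs j. piv k rs ps j q}"
definition E0 :: "nat \<Rightarrow> 'a list \<Rightarrow> bool list \<Rightarrow> nat \<Rightarrow> nat" where
  "E0 k rs ps j = card {q \<in> P k rs (j - 1) - P k rs j. \<not> piv k rs ps j q}"
definition Wc :: "nat \<Rightarrow> 'a list \<Rightarrow> bool list \<Rightarrow> nat \<Rightarrow> bool \<Rightarrow> nat \<Rightarrow> nat" where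
  "Wc k rs ps j b i = card {q \<in> (P k rs (j - 1) - seg rs (phase_start k rs j) i) \<inter> P k rs j. piv k rs ps j q = b}"
definition HH :: "nat \<Rightarrow> 'a list \<Rightarrow> nat \<Rightarrow> nat \<Rightarrow> nat" where
  "HH k rs j i = card (seg rs (phase_start k rs j) i - P k rs (j - 1))"
definition Phi :: "nat \<Rightarrow> 'a list \<Rightarrow> bool list \<Rightarrow> nat \<Rightarrow> nat \<Rightarrow> real" where
  "Phi k rs ps j i = real (ell k rs j) - real (HH k rs j i) + Gs (ell k rs j) (Wc k rs ps j True i)
     + real (E0 k rs ps j) * H (Wc k rs ps j False i)"

lemma finite_P[simp]: "finite (P k rs j)" by (simp add: P_def)

lemma phi_step:
  assumes k1: "k \<ge> 1" and len: "length ps = length rs" and j: "1 \<le> j" "phase_start k rs j < length rs"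
    and i: "phase_start k rs j \<le> i" "i < phase_start k rs (Suc j)"
  shows "fp k rs ps i \<le> Phi k rs ps j i - Phi k rs ps j (Suc i)"
proof -
  let ?s = "phase_start k rs j" and ?O = "P k rs (j - 1)" and ?Pj = "P k rs j"
    and ?pi = "piv k rs ps j" and ?l = "ell k rs j" and ?r = "rs ! i" and ?Mk = "seg rs (phase_start k rs j) i"
  have il: "i < length rs" using i st_le[of k rs "Suc j"] by simp
  have rP: "?r \<in> ?Pj" unfolding P_def seg_def using i by auto
  have ss: "seg rs ?s (Suc i) = insert ?r ?Mk" using i by (simp add: seg_Suc)
  have MkP: "?Mk \<subseteq> ?Pj" unfolding P_def seg_def using i by auto
  have fp1: "fp k rs ps i \<le> 1" unfolding fp_def by (rule measure_pmf.prob_le_1)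
  have fp0: "fp k rs ps i \<ge> 0" unfolding fp_def by simp
  have jj: "Suc (j - 1) = j" using j by simp
  have rO0: "rs ! ?s \<notin> ?O" and cO: "card ?O = k"
    using full_phase[OF k1, of rs "j - 1"] j jj by auto
  have Ph: "Phi k rs ps j (Suc i) = real ?l - real (card (insert ?r ?Mk - ?O))
     + Gs ?l (card {q \<in> (?O - insert ?r ?Mk) \<inter> ?Pj. ?pi q = True})
     + real (E0 k rs ps j) * H (card {q \<in> (?O - insert ?r ?Mk) \<inter> ?Pj. ?pi q = False})"
    unfolding Phi_def HH_def Wc_def ss ..
  have Pi: "Phi k rs ps j i = real ?l - real (card (?Mk - ?O))
     + Gs ?l (card {q \<in> (?O - ?Mk) \<inter> ?Pj. ?pi q = True})
     + real (E0 k rs ps j) * H (card {q \<in> (?O - ?Mk) \<inter> ?Pj. ?pi q = False})"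
    unfolding Phi_def HH_def Wc_def ..
  have state: "shs k rs ps i = (?Mk, ?O - ?Mk, card (?Mk - ?O), pri k rs ps i)
     \<and> DI k ?Mk (?O - ?Mk) (card (?Mk - ?O))
     \<and> INV ?Mk (?O - ?Mk) (card (?Mk - ?O)) (pri k rs ps i) (map_pmf prj (runp k rs ps i))"
    if gt: "?s < i"
  proof -
    have sh: "fst (shs k rs ps i) = ?Mk \<and> fst (snd (shs k rs ps i)) = ?O - ?Mk \<and>
       fst (snd (snd (shs k rs ps i))) = card (?Mk - ?O)"
      using shape_phase[OF k1 len j] gt i by auto
    have e: "shs k rs ps i = (?Mk, ?O - ?Mk, card (?Mk - ?O), pri k rs ps i)"
      using sh unfolding pri_def by (cases "shs k rs ps i") auto
    show ?thesis using inv_all[OF k1 len, of i] il e by simp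
  qed
  show ?thesis
  proof (cases "?r \<in> ?Mk")
    case True
    have gt: "?s < i"
    proof (rule ccontr)
      assume "\<not> ?s < i" then have "i = ?s" using i by simp
      then show False using True by simp
    qed
    have "fp k rs ps i = 0" unfolding fp_def
      by (rule fault_marked[OF conjunct2[OF conjunct2[OF state[OF gt]]] True])
    moreover have "insert ?r ?Mk = ?Mk" using True by auto
    ultimately show ?thesis using Ph Pi by simp
  next
    case nM: False
    show ?thesis
    proof (cases "?r \<in> ?O")
      case False
      have a: "card (insert ?r ?Mk - ?O) = Suc (card (?Mk - ?O))" using False nM by (simp add: insert_Diff_if)
      have b: "?O - insert ?r ?Mk = ?O - ?Mk" using False by auto
      show ?thesis using fp1 unfolding Ph Pi a b by simp
    next
      case rO: True
      have gt: "?s < i"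
      proof (rule ccontr)
        assume "\<not> ?s < i" then have "i = ?s" using i by simp
        then show False using rO rO0 by simp
      qed
      note st = state[OF gt]
      have a: "insert ?r ?Mk - ?O = ?Mk - ?O" using rO by auto
      let ?U = "?O - ?Mk"
      have prk: "pri k rs ps i q = ?pi q" if "q \<notin> ?Mk" for q
        unfolding piv_def using pr_keep[OF len i(1), of q k] il that by simp
      have U1: "{q \<in> ?U. pri k rs ps i q} = {q \<in> ?U. ?pi q}" using prk by auto
      have U0: "{q \<in> ?U. \<not> pri k rs ps i q} = {q \<in> ?U. \<not> ?pi q}" using prk by auto
      have rU: "?r \<in> ?U" using rO nM by simp
      have INVi: "INV ?Mk ?U (card (?Mk - ?O)) (pri k rs ps i) (map_pmf prj (runp k rs ps i))" using st by blast
      have DIi: "DI k ?Mk ?U (card (?Mk - ?O))" using st by blast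
      have hl: "card (?Mk - ?O) \<le> ?l" unfolding ell_def using MkP by (intro card_mono) auto
      show ?thesis
      proof (cases "?pi ?r")
        case True
        define A where "A = {q \<in> ?U \<inter> ?Pj. ?pi q = True}"
        have rA: "?r \<in> A" unfolding A_def using rU rP True by simp
        have finA: "finite A" unfolding A_def by simp
        have A2: "{q \<in> (?O - insert ?r ?Mk) \<inter> ?Pj. ?pi q = True} = A - {?r}" unfolding A_def by auto
        have B2: "{q \<in> (?O - insert ?r ?Mk) \<inter> ?Pj. ?pi q = False} = {q \<in> ?U \<inter> ?Pj. ?pi q = False}"
          using True by auto
        define w where "w = card A"
        have "A \<noteq> {}" using rA by auto
        then have w1: "w \<ge> 1" unfolding w_def using finA by (simp add: Suc_le_eq card_gt_0_iff)
        have cA: "card (A - {?r}) = w - 1" unfolding w_def using rA finA by simp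
        have G: "Gs ?l w = Gs ?l (w - 1) + min 1 (real ?l / real w)"
          using w1 by (cases w) auto
        define y where "y = card {q \<in> ?U \<inter> ?Pj. ?pi q = False}"
        have P1: "Phi k rs ps j i = real ?l - real (card (?Mk - ?O)) + Gs ?l w + real (E0 k rs ps j) * H y"
          unfolding Pi w_def A_def y_def by (rule refl)
        have P2: "Phi k rs ps j (Suc i) = real ?l - real (card (?Mk - ?O)) + Gs ?l (w - 1) + real (E0 k rs ps j) * H y"
          unfolding Ph a A2 B2 cA y_def by (rule refl)
        have diff: "Phi k rs ps j i - Phi k rs ps j (Suc i) = min 1 (real ?l / real w)"
          using P1 P2 G by linarith
        define u where "u = card {q \<in> ?U. ?pi q}"
        have Asub: "A \<subseteq> {q \<in> ?U. ?pi q}" unfolding A_def by auto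
        have wu: "w \<le> u" unfolding w_def u_def using Asub by (intro card_mono) auto
        have "fp k rs ps i = real (min (card (?Mk - ?O)) (card {q\<in>?U. pri k rs ps i q}))
            / real (card {q\<in>?U. pri k rs ps i q})"
          unfolding fp_def by (rule fault_one[OF INVi DIi rU]) (simp add: prk nM True)
        then have fpe: "fp k rs ps i = real (min (card (?Mk - ?O)) u) / real u"
          by (simp only: U1 u_def)
        have up: "real u > 0" using wu w1 by simp
        have f1: "real (min (card (?Mk - ?O)) u) / real u \<le> 1" using up by (simp add: divide_le_eq_1)
        have "real (min (card (?Mk - ?O)) u) / real u \<le> real ?l / real u"
          using up hl by (intro divide_right_mono) auto
        also have "\<dots> \<le> real ?l / real w" using wu w1 by (intro divide_left_mono) auto
        finally have f2: "real (min (card (?Mk - ?O)) u) / real u \<le> real ?l / real w" .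
        show ?thesis using f1 f2 fpe diff by simp
      next
        case False
        define A where "A = {q \<in> ?U \<inter> ?Pj. ?pi q = False}"
        have rA: "?r \<in> A" unfolding A_def using rU rP False by simp
        have finA: "finite A" unfolding A_def by simp
        have A2: "{q \<in> (?O - insert ?r ?Mk) \<inter> ?Pj. ?pi q = False} = A - {?r}" unfolding A_def by auto
        have B2: "{q \<in> (?O - insert ?r ?Mk) \<inter> ?Pj. ?pi q = True} = {q \<in> ?U \<inter> ?Pj. ?pi q = True}"
          using False by auto
        define w where "w = card A"
        have "A \<noteq> {}" using rA by auto
        then have w1: "w \<ge> 1" unfolding w_def using finA by (simp add: Suc_le_eq card_gt_0_iff)
        have cA: "card (A - {?r}) = w - 1" unfolding w_def using rA finA by simp
        have Hw: "H w = H (w - 1) + 1 / real w"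
          using w1 H_Suc[of "w - 1"] by simp
        have diff: "Phi k rs ps j i - Phi k rs ps j (Suc i) = real (E0 k rs ps j) / real w"
          unfolding Ph Pi a A2 B2 cA using Hw unfolding A_def w_def by (simp add: algebra_simps)
        define u where "u = card {q \<in> ?U. ?pi q}"
        define u0 where "u0 = card {q \<in> ?U. \<not> ?pi q}"
        have Asub: "A \<subseteq> {q \<in> ?U. \<not> ?pi q}" unfolding A_def by auto
        have wu: "w \<le> u0" unfolding w_def u0_def using Asub by (intro card_mono) auto
        have "fp k rs ps i = real (card (?Mk - ?O) - min (card (?Mk - ?O)) (card {q\<in>?U. pri k rs ps i q}))
            / real (card {q\<in>?U. \<not> pri k rs ps i q})"
          unfolding fp_def by (rule fault_zero[OF INVi DIi rU]) (simp add: prk nM False)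
        then have fpe: "fp k rs ps i = real (card (?Mk - ?O) - min (card (?Mk - ?O)) u) / real u0"
          by (simp only: U1 U0 u_def u0_def)
        define N1 where "N1 = {q \<in> ?O - ?Pj. ?pi q}"
        define N0 where "N0 = {q \<in> ?O - ?Pj. \<not> ?pi q}"
        have cPj: "card ?Pj \<le> k" by (rule card_P_le[OF k1])
        have l_le: "?l \<le> card (?O - ?Pj)"
        proof -
          have "?l = card ?Pj - card (?Pj \<inter> ?O)" unfolding ell_def by (simp add: card_Diff_subset_Int)
          moreover have "card (?O - ?Pj) = card ?O - card (?O \<inter> ?Pj)" by (simp add: card_Diff_subset_Int)
          ultimately show ?thesis using cPj cO by (simp add: Int_commute diff_le_mono)
        qed
        have split: "card (?O - ?Pj) = card N1 + card N0"
        proof -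
          have e: "?O - ?Pj = N1 \<union> N0" and d: "N1 \<inter> N0 = {}" unfolding N1_def N0_def by auto
          have f: "finite N1" "finite N0" unfolding N1_def N0_def by auto
          show ?thesis unfolding e by (rule card_Un_disjoint[OF f d])
        qed
        have N1sub: "N1 \<subseteq> {q \<in> ?U. ?pi q}" unfolding N1_def using MkP by auto
        have "card N1 \<le> u" unfolding u_def using N1sub by (intro card_mono) auto
        moreover have "card N0 = E0 k rs ps j" unfolding N0_def E0_def ..
        ultimately have key: "card (?Mk - ?O) - min (card (?Mk - ?O)) u \<le> E0 k rs ps j"
          using hl l_le split by linarith
        have up: "real u0 > 0" using wu w1 by simp
        have "fp k rs ps i \<le> real (E0 k rs ps j) / real u0"
          unfolding fpe using up key by (intro divide_right_mono) auto
        also have "\<dots> \<le> real (E0 k rs ps j) / real w" using wu w1 by (intro divide_left_mono) auto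
        finally show ?thesis using diff by simp
      qed
    qed
  qed
qed


lemma telescope_le:
  fixes f :: "nat \<Rightarrow> real"
  assumes "a \<le> b" "\<And>i. a \<le> i \<Longrightarrow> i < b \<Longrightarrow> f i \<le> g i - g (Suc i)"
  shows "(\<Sum>i\<in>{a..<b}. f i) \<le> g a - g b"
  using assms
proof (induction b rule: dec_induct)
  case base then show ?case by simp
next
  case (step b)
  have "(\<Sum>i\<in>{a..<Suc b}. f i) = (\<Sum>i\<in>{a..<b}. f i) + f b" using step by simp
  also have "\<dots> \<le> (g a - g b) + (g b - g (Suc b))" using step by (intro add_mono) auto
  finally show ?case by simp
qed

lemma phase_sum:
  assumes k1: "k \<ge> 1" and len: "length ps = length rs" and j: "1 \<le> j" "phase_start k rs j < length rs"
  shows "(\<Sum>i\<in>{phase_start k rs j..<phase_start k rs (Suc j)}. fp k rs ps i)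
     \<le> 2 * real (ell k rs j) + real (ell k rs j) * ln (1 + real (E1 k rs ps j) / real (ell k rs j))
       + real (E0 k rs ps j) * H k"
proof -
  let ?s = "phase_start k rs j" and ?t = "phase_start k rs (Suc j)" and ?O = "P k rs (j - 1)" and ?Pj = "P k rs j"
  have st: "?s \<le> ?t" by (rule st_mono_Suc)
  have "(\<Sum>i\<in>{?s..<?t}. fp k rs ps i) \<le> Phi k rs ps j ?s - Phi k rs ps j ?t"
    by (rule telescope_le[OF st]) (rule phi_step[OF k1 len j], auto)
  moreover have "Phi k rs ps j ?t \<ge> 0"
  proof -
    have "HH k rs j ?t = ell k rs j" unfolding HH_def ell_def P_def ..
    then show ?thesis unfolding Phi_def using Gs_nonneg H_nonneg by simp
  qed
  moreover have "Phi k rs ps j ?s \<le> 2 * real (ell k rs j) + real (ell k rs j) * ln (1 + real (E1 k rs ps j) / real (ell k rs j))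
       + real (E0 k rs ps j) * H k"
  proof -
    have jj: "Suc (j - 1) = j" using j by simp
    have rO: "rs ! ?s \<notin> ?O" and cO: "card ?O = k"
      using full_phase[OF k1, of rs "j - 1"] j jj by auto
    have "rs ! ?s \<in> ?Pj" unfolding P_def seg_def using st_less[OF j(2)] by auto
    then have "rs ! ?s \<in> ?Pj - ?O" using rO by simp
    then have l1: "ell k rs j \<ge> 1" unfolding ell_def
      by (metis One_nat_def Suc_leI card_gt_0_iff empty_iff finite_Diff finite_P)
    have h0: "HH k rs j ?s = 0" unfolding HH_def by simp
    have w1: "Wc k rs ps j True ?s = E1 k rs ps j" unfolding Wc_def E1_def by (rule arg_cong[where f=card]) auto
    have w0: "Wc k rs ps j False ?s \<le> k"
    proof -
      have "Wc k rs ps j False ?s \<le> card ?O" unfolding Wc_def by (rule card_mono) auto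
      then show ?thesis using cO by simp
    qed
    have "H (Wc k rs ps j False ?s) \<le> H k" by (rule H_mono[OF w0])
    then have "real (E0 k rs ps j) * H (Wc k rs ps j False ?s) \<le> real (E0 k rs ps j) * H k"
      by (intro mult_left_mono) auto
    moreover have "Gs (ell k rs j) (E1 k rs ps j) \<le> real (ell k rs j) + real (ell k rs j) * ln (1 + real (E1 k rs ps j) / real (ell k rs j))"
      by (rule Gs_bound[OF l1])
    ultimately show ?thesis unfolding Phi_def h0 w1 by simp
  qed
  ultimately show ?thesis by linarith
qed

lemma phase0_sum:
  assumes k1: "k \<ge> 1" and len: "length ps = length rs"
  shows "(\<Sum>i\<in>{0..<phase_start k rs (Suc 0)}. fp k rs ps i) \<le> real k"
proof -
  let ?t = "phase_start k rs (Suc 0)"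
  have "(\<Sum>i\<in>{0..<?t}. fp k rs ps i) \<le> (- real (card (seg rs 0 0))) - (- real (card (seg rs 0 ?t)))"
  proof (rule telescope_le)
    fix i assume i: "0 \<le> i" "i < ?t"
    have il: "i < length rs" using i st_le[of k rs "Suc 0"] by simp
    have sh: "fst (shs k rs ps i) = seg rs 0 i \<and> fst (snd (shs k rs ps i)) = {} \<and> fst (snd (snd (shs k rs ps i))) = 0"
      using shape0[OF k1 len, of i] i by simp
    have inv: "INV (seg rs 0 i) {} 0 (snd (snd (snd (shs k rs ps i)))) (map_pmf prj (runp k rs ps i))"
      using inv_all[OF k1 len, of i] il sh by simp
    have ss: "seg rs 0 (Suc i) = insert (rs ! i) (seg rs 0 i)" by (simp add: seg_Suc)
    show "fp k rs ps i \<le> - real (card (seg rs 0 i)) - - real (card (seg rs 0 (Suc i)))"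
    proof (cases "rs ! i \<in> seg rs 0 i")
      case True
      then have "fp k rs ps i = 0" unfolding fp_def by (rule fault_marked[OF inv])
      then show ?thesis using True ss by (simp add: insert_absorb)
    next
      case False
      have "fp k rs ps i \<le> 1" unfolding fp_def by (rule measure_pmf.prob_le_1)
      then show ?thesis using False ss by simp
    qed
  qed simp
  moreover have "card (seg rs 0 ?t) \<le> k" using card_P_le[OF k1, of rs 0] unfolding P_def by (simp add: st_0)
  ultimately show ?thesis by simp
qed

lemma sum_phases:
  fixes f :: "nat \<Rightarrow> real"
  shows "(\<Sum>i<phase_start k rs m. f i) = (\<Sum>j<m. \<Sum>i\<in>{phase_start k rs j..<phase_start k rs (Suc j)}. f i)"
proof (induction m)
  case 0 then show ?case by (simp add: st_0)
next
  case (Suc m)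
  have "(\<Sum>i<phase_start k rs (Suc m). f i) = (\<Sum>i\<in>{0..<phase_start k rs (Suc m)}. f i)"
    by (simp add: atLeast0LessThan)
  also have "\<dots> = (\<Sum>i\<in>{0..<phase_start k rs m}. f i) + (\<Sum>i\<in>{phase_start k rs m..<phase_start k rs (Suc m)}. f i)"
    by (rule sum.atLeastLessThan_concat[symmetric]) (auto simp: st_mono_Suc)
  finally show ?case using Suc by (simp add: atLeast0LessThan)
qed

definition JJ :: "nat \<Rightarrow> 'a list \<Rightarrow> nat set" where
  "JJ k rs = {j. 1 \<le> j \<and> j < length rs \<and> phase_start k rs j < length rs}"

lemma finite_JJ[simp]: "finite (JJ k rs)" unfolding JJ_def by auto

lemma total_bound:
  assumes k1: "k \<ge> 1" and len: "length ps = length rs"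
  shows "mp_expected_cost k rs ps \<le> real k + (\<Sum>j\<in>JJ k rs. 2 * real (ell k rs j)
      + real (ell k rs j) * ln (1 + real (E1 k rs ps j) / real (ell k rs j)) + real (E0 k rs ps j) * H k)"
proof -
  let ?S = "\<lambda>j. (\<Sum>i\<in>{phase_start k rs j..<phase_start k rs (Suc j)}. fp k rs ps i)"
  let ?B = "\<lambda>j. 2 * real (ell k rs j) + real (ell k rs j) * ln (1 + real (E1 k rs ps j) / real (ell k rs j)) + real (E0 k rs ps j) * H k"
  have "mp_expected_cost k rs ps = (\<Sum>i<length rs. fp k rs ps i)" by (rule exp_cost[OF k1 len])
  also have "\<dots> = (\<Sum>j<length rs. ?S j)" using sum_phases[of "fp k rs ps" k rs "length rs"] st_n[of k rs] by simp
  also have "\<dots> \<le> real k + (\<Sum>j\<in>JJ k rs. ?B j)"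
  proof (cases "length rs = 0")
    case True
    then have "JJ k rs = {}" unfolding JJ_def by simp
    then show ?thesis using True by simp
  next
    case False
    have split: "{..<length rs} = insert 0 ({1..<length rs})" using False by auto
    have "(\<Sum>j<length rs. ?S j) = ?S 0 + (\<Sum>j\<in>{1..<length rs}. ?S j)" unfolding split by simp
    also have "(\<Sum>j\<in>{1..<length rs}. ?S j) = (\<Sum>j\<in>JJ k rs. ?S j)"
    proof (rule sum.mono_neutral_right)
      show "finite {1..<length rs}" by simp
      show "JJ k rs \<subseteq> {1..<length rs}" unfolding JJ_def by auto
      show "\<forall>j\<in>{1..<length rs} - JJ k rs. ?S j = 0"
      proof
        fix j assume "j \<in> {1..<length rs} - JJ k rs"
        then have "phase_start k rs j = length rs" unfolding JJ_def using st_le[of k rs j] by auto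
        then have "phase_start k rs (Suc j) = length rs" unfolding st_Suc by (simp add: ns_ge)
        then show "?S j = 0" using \<open>phase_start k rs j = length rs\<close> by simp
      qed
    qed
    also have "(\<Sum>j\<in>JJ k rs. ?S j) \<le> (\<Sum>j\<in>JJ k rs. ?B j)"
      by (rule sum_mono) (rule phase_sum[OF k1 len], auto simp: JJ_def)
    finally show ?thesis using phase0_sum[OF k1 len] by (simp add: st_0)
  qed
  finally show ?thesis .
qed


definition Aset :: "nat \<Rightarrow> 'a list \<Rightarrow> bool list \<Rightarrow> bool \<Rightarrow> nat \<Rightarrow> nat set" where
  "Aset k rs ps b j = {i. phase_start k rs (j - 1) \<le> i \<and> i < phase_start k rs j \<and>
     (\<forall>i'. i < i' \<and> i' < phase_start k rs j \<longrightarrow> rs ! i' \<noteq> rs ! i) \<and> ps ! i = b \<and> (rs ! i \<in> P k rs j) = b}"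

lemma truth_iff:
  assumes "phase_start k rs j' \<le> i" "i < phase_start k rs (Suc j')"
  shows "truth k rs i \<longleftrightarrow> rs ! i \<notin> P k rs (Suc j')"
proof
  assume "truth k rs i"
  then have "\<not> (\<exists>i'. phase_start k rs (Suc j') \<le> i' \<and> i' < phase_start k rs (Suc (Suc j')) \<and> rs ! i' = rs ! i)"
    unfolding truth_def using assms by blast
  then show "rs ! i \<notin> P k rs (Suc j')" unfolding P_def seg_def by auto
next
  assume a: "rs ! i \<notin> P k rs (Suc j')"
  show "truth k rs i" unfolding truth_def
  proof (intro allI impI)
    fix j'' assume "phase_start k rs j'' \<le> i \<and> i < phase_start k rs (Suc j'')"
    then have jj: "j'' = j'" using phase_unique assms by blast
    show "\<not> (\<exists>i'. phase_start k rs (Suc j'') \<le> i' \<and> i' < phase_start k rs (Suc (Suc j'')) \<and> rs ! i' = rs ! i)"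
    proof
      assume "\<exists>i'. phase_start k rs (Suc j'') \<le> i' \<and> i' < phase_start k rs (Suc (Suc j'')) \<and> rs ! i' = rs ! i"
      then obtain i' where "phase_start k rs (Suc j') \<le> i'" "i' < phase_start k rs (Suc (Suc j'))" "rs ! i' = rs ! i"
        using jj by blast
      then have "rs ! i \<in> P k rs (Suc j')" unfolding P_def seg_def by (metis atLeastLessThan_iff image_eqI)
      then show False using a by simp
    qed
  qed
qed

lemma eta_union:
  "{i. i < length rs \<and> counted k rs i \<and> ps ! i = b \<and> truth k rs i = (\<not> b)} = (\<Union>j\<in>JJ k rs. Aset k rs ps b j)"
proof
  show "{i. i < length rs \<and> counted k rs i \<and> ps ! i = b \<and> truth k rs i = (\<not> b)} \<subseteq> (\<Union>j\<in>JJ k rs. Aset k rs ps b j)"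
  proof
    fix i assume "i \<in> {i. i < length rs \<and> counted k rs i \<and> ps ! i = b \<and> truth k rs i = (\<not> b)}"
    then have i: "i < length rs" "counted k rs i" "ps ! i = b" "truth k rs i = (\<not> b)" by auto
    obtain j' where j': "phase_start k rs j' \<le> i" "i < phase_start k rs (Suc j')"
      "phase_start k rs (Suc j') < length rs"
      "\<not> (\<exists>i'. i < i' \<and> i' < phase_start k rs (Suc j') \<and> rs ! i' = rs ! i)"
      using i(2) unfolding counted_def by blast
    have "Suc j' \<in> JJ k rs" unfolding JJ_def using j'(3) st_less_j[OF j'(3)] by simp
    moreover have "(rs ! i \<in> P k rs (Suc j')) = b" using truth_iff[OF j'(1,2)] i(4) by auto
    then have "i \<in> Aset k rs ps b (Suc j')" unfolding Aset_def using j' i by auto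
    ultimately show "i \<in> (\<Union>j\<in>JJ k rs. Aset k rs ps b j)" by blast
  qed
  show "(\<Union>j\<in>JJ k rs. Aset k rs ps b j) \<subseteq> {i. i < length rs \<and> counted k rs i \<and> ps ! i = b \<and> truth k rs i = (\<not> b)}"
  proof
    fix i assume "i \<in> (\<Union>j\<in>JJ k rs. Aset k rs ps b j)"
    then obtain j where j: "j \<in> JJ k rs" and a: "i \<in> Aset k rs ps b j" by blast
    have j1: "Suc (j - 1) = j" using j unfolding JJ_def by auto
    have jn: "phase_start k rs j < length rs" using j unfolding JJ_def by auto
    have a2: "phase_start k rs (j - 1) \<le> i" "i < phase_start k rs (Suc (j - 1))"
      "\<forall>i'. i < i' \<and> i' < phase_start k rs (Suc (j - 1)) \<longrightarrow> rs ! i' \<noteq> rs ! i" "ps ! i = b"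
      "(rs ! i \<in> P k rs (Suc (j - 1))) = b"
      using a j1 unfolding Aset_def by auto
    have "counted k rs i" unfolding counted_def using a2 jn j1 by auto
    moreover have "truth k rs i = (\<not> b)" using truth_iff[OF a2(1,2)] a2(5) by auto
    moreover have "i < length rs" using a2(2) jn j1 by simp
    ultimately show "i \<in> {i. i < length rs \<and> counted k rs i \<and> ps ! i = b \<and> truth k rs i = (\<not> b)}"
      using a2(4) by auto
  qed
qed

lemma Aset_disj:
  assumes "j \<in> JJ k rs" "j' \<in> JJ k rs" "j \<noteq> j'"
  shows "Aset k rs ps b j \<inter> Aset k rs ps b j' = {}"
proof (rule ccontr)
  assume "Aset k rs ps b j \<inter> Aset k rs ps b j' \<noteq> {}"
  then obtain i where i: "i \<in> Aset k rs ps b j" "i \<in> Aset k rs ps b j'" by blast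
  have j1: "Suc (j - 1) = j" "Suc (j' - 1) = j'" using assms unfolding JJ_def by auto
  have "j - 1 = j' - 1"
    by (rule phase_unique[of k rs "j - 1" i "j' - 1"]) (use i j1 in \<open>auto simp: Aset_def\<close>)
  then show False using j1 assms(3) by (metis)
qed

lemma card_Aset:
  assumes len: "length ps = length rs" and j: "j \<in> JJ k rs"
  shows "card (Aset k rs ps b j) = card {q \<in> P k rs (j - 1). piv k rs ps j q = b \<and> (q \<in> P k rs j) = b}"
proof -
  have j1: "Suc (j - 1) = j" using j unfolding JJ_def by auto
  have jn: "phase_start k rs j \<le> length rs" by (rule st_le)
  let ?A = "Aset k rs ps b j" and ?Q = "{q \<in> P k rs (j - 1). piv k rs ps j q = b \<and> (q \<in> P k rs j) = b}"
  have "bij_betw (\<lambda>i. rs ! i) ?A ?Q"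
  proof (rule bij_betw_imageI)
    show "inj_on (\<lambda>i. rs ! i) ?A"
    proof
      fix x y assume x: "x \<in> ?A" and y: "y \<in> ?A" and e: "rs ! x = rs ! y"
      show "x = y"
      proof (rule ccontr)
        assume "x \<noteq> y"
        then have "x < y \<or> y < x" by auto
        then show False using x y e unfolding Aset_def by auto
      qed
    qed
    show "(\<lambda>i. rs ! i) ` ?A = ?Q"
    proof
      show "(\<lambda>i. rs ! i) ` ?A \<subseteq> ?Q"
      proof
        fix q assume "q \<in> (\<lambda>i. rs ! i) ` ?A"
        then obtain i where i: "i \<in> ?A" and q: "q = rs ! i" by blast
        have a: "phase_start k rs (j - 1) \<le> i" "i < phase_start k rs j"
          "\<forall>i'. i < i' \<and> i' < phase_start k rs j \<longrightarrow> rs ! i' \<noteq> rs ! i" "ps ! i = b" "(rs ! i \<in> P k rs j) = b"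
          using i unfolding Aset_def by auto
        have "q \<in> P k rs (j - 1)" unfolding P_def seg_def q j1 using a by auto
        moreover have "piv k rs ps j q = ps ! i"
          unfolding piv_def by (rule pr_last[OF len a(2) jn]) (use a q in auto)
        ultimately show "q \<in> ?Q" using a q by auto
      qed
      show "?Q \<subseteq> (\<lambda>i. rs ! i) ` ?A"
      proof
        fix q assume q: "q \<in> ?Q"
        define T where "T = {t. phase_start k rs (j - 1) \<le> t \<and> t < phase_start k rs j \<and> rs ! t = q}"
        have "T \<noteq> {}" using q unfolding T_def P_def seg_def j1 by auto
        moreover have fT: "finite T" unfolding T_def by auto
        ultimately have mT: "Max T \<in> T" by (rule Max_in[rotated])
        define m where "m = Max T"
        have m: "phase_start k rs (j - 1) \<le> m" "m < phase_start k rs j" "rs ! m = q"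
          using mT unfolding m_def T_def by auto
        have last: "\<forall>i'. m < i' \<and> i' < phase_start k rs j \<longrightarrow> rs ! i' \<noteq> q"
        proof (intro allI impI)
          fix i' assume i': "m < i' \<and> i' < phase_start k rs j"
          show "rs ! i' \<noteq> q"
          proof
            assume "rs ! i' = q"
            then have "i' \<in> T" unfolding T_def using i' m by auto
            then have "i' \<le> m" unfolding m_def using fT by simp
            then show False using i' by simp
          qed
        qed
        have "piv k rs ps j q = ps ! m"
          unfolding piv_def by (rule pr_last[OF len m(2) jn m(3) last])
        then have "m \<in> ?A" unfolding Aset_def using m last q by auto
        then show "q \<in> (\<lambda>i. rs ! i) ` ?A" using m(3) by blast
      qed
    qed
  qed
  then show ?thesis by (rule bij_betw_same_card)
qed

lemma finite_Aset[simp]: "finite (Aset k rs ps b j)" unfolding Aset_def by auto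

lemma eta_sum:
  assumes len: "length ps = length rs"
  shows "eta k rs ps b = (\<Sum>j\<in>JJ k rs. card {q \<in> P k rs (j - 1). piv k rs ps j q = b \<and> (q \<in> P k rs j) = b})"
proof -
  have "eta k rs ps b = card (\<Union>j\<in>JJ k rs. Aset k rs ps b j)" unfolding eta_def eta_union ..
  also have "\<dots> = (\<Sum>j\<in>JJ k rs. card (Aset k rs ps b j))"
    by (rule card_UN_disjoint) (auto dest: Aset_disj)
  also have "\<dots> = (\<Sum>j\<in>JJ k rs. card {q \<in> P k rs (j - 1). piv k rs ps j q = b \<and> (q \<in> P k rs j) = b})"
    by (rule sum.cong[OF refl]) (rule card_Aset[OF len])
  finally show ?thesis .
qed

lemma eta_True:
  assumes len: "length ps = length rs"
  shows "eta k rs ps True = (\<Sum>j\<in>JJ k rs. E1 k rs ps j)"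
  unfolding eta_sum[OF len] E1_def by (rule sum.cong) (auto intro: arg_cong[where f=card])

lemma eta_False:
  assumes len: "length ps = length rs"
  shows "eta k rs ps False = (\<Sum>j\<in>JJ k rs. E0 k rs ps j)"
  unfolding eta_sum[OF len] E0_def by (rule sum.cong) (auto intro: arg_cong[where f=card])


lemma off_step:
  assumes "offline_run k rs Cs" "i < length rs"
  shows "(rs ! i \<in> Cs ! i \<and> Cs ! Suc i = Cs ! i) \<or>
         (rs ! i \<notin> Cs ! i \<and> card (Cs ! i) < k \<and> Cs ! Suc i = insert (rs ! i) (Cs ! i)) \<or>
         (rs ! i \<notin> Cs ! i \<and> \<not> card (Cs ! i) < k \<and> (\<exists>q\<in>Cs ! i. Cs ! Suc i = insert (rs ! i) (Cs ! i - {q})))"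
proof -
  have "\<forall>i < length rs.
        (if rs ! i \<in> Cs ! i then Cs ! Suc i = Cs ! i
         else if card (Cs ! i) < k then Cs ! Suc i = insert (rs ! i) (Cs ! i)
         else (\<exists>q \<in> Cs ! i. Cs ! Suc i = insert (rs ! i) (Cs ! i - {q})))"
    using assms(1) unfolding offline_run_def by blast
  then have h: "if rs ! i \<in> Cs ! i then Cs ! Suc i = Cs ! i
         else if card (Cs ! i) < k then Cs ! Suc i = insert (rs ! i) (Cs ! i)
         else (\<exists>q \<in> Cs ! i. Cs ! Suc i = insert (rs ! i) (Cs ! i - {q}))" using assms(2) by blast
  show ?thesis
  proof (cases "rs ! i \<in> Cs ! i")
    case True then show ?thesis using h by simp
  next
    case False
    then show ?thesis using h by (cases "card (Cs ! i) < k") simp_all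
  qed
qed

lemma off_inv:
  assumes "offline_run k rs Cs" "i \<le> length rs"
  shows "finite (Cs ! i) \<and> card (Cs ! i) \<le> k"
  using assms(2)
proof (induction i)
  case 0 then show ?case using assms(1) unfolding offline_run_def by simp
next
  case (Suc i)
  then have IH: "finite (Cs ! i)" "card (Cs ! i) \<le> k" and il: "i < length rs" by auto
  note h = off_step[OF assms(1) il]
  show ?case
  proof (cases "rs ! i \<in> Cs ! i")
    case True
    then have "Cs ! Suc i = Cs ! i" using h by blast
    then show ?thesis using IH by simp
  next
    case F: False
    show ?thesis
    proof (cases "card (Cs ! i) < k")
      case True
      then have "Cs ! Suc i = insert (rs ! i) (Cs ! i)" using h F by blast
      then show ?thesis using IH True by (simp add: card_insert_if)
    next
      case False
      then obtain q where q: "q \<in> Cs ! i" "Cs ! Suc i = insert (rs ! i) (Cs ! i - {q})" using h F by blast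
      have fin: "finite (Cs ! i - {q})" using IH by simp
      have a: "card (insert (rs ! i) (Cs ! i - {q})) \<le> Suc (card (Cs ! i - {q}))"
        using fin by (simp add: card_insert_if)
      have b: "card (Cs ! i - {q}) = card (Cs ! i) - 1" using q IH by simp
      have c: "card (Cs ! i) \<ge> 1"
      proof -
        have "Cs ! i \<noteq> {}" using q by auto
        then show ?thesis using IH(1) by (simp add: Suc_le_eq card_gt_0_iff)
      qed
      show ?thesis using q IH a b c fin by simp
    qed
  qed
qed

lemma off_sub:
  assumes "offline_run k rs Cs" "a \<le> t" "t \<le> length rs"
  shows "Cs ! t \<subseteq> Cs ! a \<union> seg rs a t"
  using assms(2,3)
proof (induction t rule: dec_induct)
  case base then show ?case by simp
next
  case (step t)
  then have tl: "t < length rs" by simp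
  have "Cs ! Suc t \<subseteq> insert (rs ! t) (Cs ! t)" using off_step[OF assms(1) tl] by auto
  then show ?case using step by (auto simp: seg_Suc)
qed

lemma window:
  assumes off: "offline_run k rs Cs" and ab: "a \<le> b" "b \<le> length rs"
  shows "card (seg rs a b) \<le> k + card {i. a \<le> i \<and> i < b \<and> rs ! i \<notin> Cs ! i}"
proof -
  let ?F = "{i. a \<le> i \<and> i < b \<and> rs ! i \<notin> Cs ! i}"
  let ?X = "seg rs a b - Cs ! a"
  have ia: "finite (Cs ! a)" "card (Cs ! a) \<le> k" using off_inv[OF off, of a] ab by auto
  have c1: "card (seg rs a b) \<le> card ?X + card (Cs ! a)"
  proof -
    have "seg rs a b \<subseteq> ?X \<union> Cs ! a" by auto
    then have "card (seg rs a b) \<le> card (?X \<union> Cs ! a)" using ia by (intro card_mono) auto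
    also have "\<dots> \<le> card ?X + card (Cs ! a)" by (rule card_Un_le)
    finally show ?thesis .
  qed
  define f where "f q = (LEAST t. a \<le> t \<and> t < b \<and> rs ! t = q)" for q
  have fq: "a \<le> f q \<and> f q < b \<and> rs ! f q = q \<and> (\<forall>t. a \<le> t \<and> t < f q \<longrightarrow> rs ! t \<noteq> q)" if q: "q \<in> ?X" for q
  proof -
    have ex: "\<exists>t. a \<le> t \<and> t < b \<and> rs ! t = q" using q unfolding seg_def by auto
    have "a \<le> f q \<and> f q < b \<and> rs ! f q = q" unfolding f_def by (rule LeastI_ex[OF ex])
    moreover have "\<forall>t. a \<le> t \<and> t < f q \<longrightarrow> rs ! t \<noteq> q"
    proof (intro allI impI)
      fix t assume t: "a \<le> t \<and> t < f q"
      show "rs ! t \<noteq> q"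
      proof
        assume "rs ! t = q"
        then have "f q \<le> t" unfolding f_def using t calculation by (intro Least_le) auto
        then show False using t by simp
      qed
    qed
    ultimately show ?thesis by blast
  qed
  have "card ?X \<le> card ?F"
  proof (rule card_inj_on_le)
    show "inj_on f ?X" by (rule inj_onI) (metis fq)
    show "f ` ?X \<subseteq> ?F"
    proof
      fix t assume "t \<in> f ` ?X"
      then obtain q where q: "q \<in> ?X" and t: "t = f q" by blast
      have f1: "a \<le> t" "t < b" "rs ! t = q" "\<forall>t'. a \<le> t' \<and> t' < t \<longrightarrow> rs ! t' \<noteq> q" using fq[OF q] t by auto
      have "Cs ! t \<subseteq> Cs ! a \<union> seg rs a t" by (rule off_sub[OF off f1(1)]) (use f1 ab in simp)
      moreover have "q \<notin> seg rs a t" using f1(4) unfolding seg_def by auto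
      moreover have "q \<notin> Cs ! a" using q by simp
      ultimately have "rs ! t \<notin> Cs ! t" using f1(3) by auto
      then show "t \<in> ?F" using f1 by simp
    qed
    show "finite ?F" by (rule finite_subset[of _ "{..<b}"]) auto
  qed
  then show ?thesis using c1 ia by simp
qed

lemma window_count:
  assumes "i < length rs"
  shows "card {j \<in> JJ k rs. phase_start k rs (j - 1) \<le> i \<and> i < phase_start k rs (Suc j)} \<le> 2"
proof -
  obtain j0 where j0: "phase_start k rs j0 \<le> i" "i < phase_start k rs (Suc j0)"
    using phase_exists[OF assms] by blast
  have "{j \<in> JJ k rs. phase_start k rs (j - 1) \<le> i \<and> i < phase_start k rs (Suc j)} \<subseteq> {j0, Suc j0}"
  proof
    fix j assume j: "j \<in> {j \<in> JJ k rs. phase_start k rs (j - 1) \<le> i \<and> i < phase_start k rs (Suc j)}"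
    have j1: "Suc (j - 1) = j" using j unfolding JJ_def by auto
    show "j \<in> {j0, Suc j0}"
    proof (cases "i < phase_start k rs j")
      case True
      then have "j - 1 = j0" using phase_unique[of k rs "j - 1" i j0] j j0 j1 by auto
      then show ?thesis using j1 by auto
    next
      case False
      then have "j = j0" using phase_unique[of k rs j i j0] j j0 by auto
      then show ?thesis by auto
    qed
  qed
  then have "card {j \<in> JJ k rs. phase_start k rs (j - 1) \<le> i \<and> i < phase_start k rs (Suc j)} \<le> card {j0, Suc j0}"
    by (intro card_mono) auto
  also have "\<dots> \<le> 2" by (simp add: card_insert_if)
  finally show ?thesis .
qed

lemma opt_run:
  assumes k1: "k \<ge> 1" and off: "offline_run k rs Cs"
  shows "(\<Sum>j\<in>JJ k rs. ell k rs j) \<le> 2 * run_cost rs Cs"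
proof -
  let ?F = "{i. i < length rs \<and> rs ! i \<notin> Cs ! i}"
  let ?W = "\<lambda>j. {i. phase_start k rs (j - 1) \<le> i \<and> i < phase_start k rs (Suc j)}"
  have finF: "finite ?F" by auto
  have each: "ell k rs j \<le> card {i\<in>?F. i \<in> ?W j}" if j: "j \<in> JJ k rs" for j
  proof -
    have j1: "Suc (j - 1) = j" using j unfolding JJ_def by auto
    have jn: "phase_start k rs j < length rs" using j unfolding JJ_def by auto
    have m1: "phase_start k rs (j - 1) \<le> phase_start k rs j" using st_mono[of "j - 1" j] by simp
    have m2: "phase_start k rs j \<le> phase_start k rs (Suc j)" by (rule st_mono_Suc)
    have b: "phase_start k rs (Suc j) \<le> length rs" by (rule st_le)
    have sg: "seg rs (phase_start k rs (j - 1)) (phase_start k rs (Suc j)) = P k rs (j - 1) \<union> P k rs j"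
      unfolding P_def j1 by (rule seg_split[OF m1 m2])
    have cO: "card (P k rs (j - 1)) = k" using full_phase(2)[OF k1, of rs "j - 1"] j1 jn by simp
    have cU: "card (P k rs (j - 1) \<union> P k rs j) = k + ell k rs j"
    proof -
      have e: "P k rs (j - 1) \<union> P k rs j = P k rs (j - 1) \<union> (P k rs j - P k rs (j - 1))" by auto
      have "card (P k rs (j - 1) \<union> (P k rs j - P k rs (j - 1))) = card (P k rs (j - 1)) + card (P k rs j - P k rs (j - 1))"
        by (rule card_Un_disjoint) auto
      then show ?thesis unfolding ell_def e cO .
    qed
    have "card (seg rs (phase_start k rs (j - 1)) (phase_start k rs (Suc j)))
       \<le> k + card {i. phase_start k rs (j - 1) \<le> i \<and> i < phase_start k rs (Suc j) \<and> rs ! i \<notin> Cs ! i}"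
      by (rule window[OF off _ b]) (use m1 m2 in simp)
    moreover have "{i. phase_start k rs (j - 1) \<le> i \<and> i < phase_start k rs (Suc j) \<and> rs ! i \<notin> Cs ! i} = {i\<in>?F. i \<in> ?W j}"
      using b by auto
    ultimately show ?thesis using sg cU by simp
  qed
  have "(\<Sum>j\<in>JJ k rs. ell k rs j) \<le> (\<Sum>j\<in>JJ k rs. card {i\<in>?F. i \<in> ?W j})"
    by (rule sum_mono) (rule each)
  also have "\<dots> = (\<Sum>j\<in>JJ k rs. \<Sum>i\<in>?F. if i \<in> ?W j then 1 else 0)"
  proof (rule sum.cong[OF refl])
    fix j
    have "(\<Sum>i\<in>?F. if i \<in> ?W j then 1 else 0) = card (?F \<inter> {i. i \<in> ?W j})"
      by (simp add: sum.If_cases finF)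
    also have "?F \<inter> {i. i \<in> ?W j} = {i\<in>?F. i \<in> ?W j}" by blast
    finally show "card {i\<in>?F. i \<in> ?W j} = (\<Sum>i\<in>?F. if i \<in> ?W j then 1 else 0)" by simp
  qed
  also have "\<dots> = (\<Sum>i\<in>?F. \<Sum>j\<in>JJ k rs. if i \<in> ?W j then 1 else 0)" by (rule sum.swap)
  also have "\<dots> = (\<Sum>i\<in>?F. card {j \<in> JJ k rs. i \<in> ?W j})"
  proof (rule sum.cong[OF refl])
    fix i
    have "(\<Sum>j\<in>JJ k rs. if i \<in> ?W j then 1 else 0) = card (JJ k rs \<inter> {j. i \<in> ?W j})"
      by (simp add: sum.If_cases)
    also have "JJ k rs \<inter> {j. i \<in> ?W j} = {j \<in> JJ k rs. i \<in> ?W j}" by blast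
    finally show "(\<Sum>j\<in>JJ k rs. if i \<in> ?W j then 1 else 0) = card {j \<in> JJ k rs. i \<in> ?W j}" by simp
  qed
  also have "\<dots> \<le> (\<Sum>i\<in>?F. 2)"
  proof (rule sum_mono)
    fix i assume "i \<in> ?F"
    then show "card {j \<in> JJ k rs. i \<in> ?W j} \<le> 2" using window_count[of i rs k] by simp
  qed
  also have "\<dots> = 2 * run_cost rs Cs" unfolding run_cost_def by simp
  finally show ?thesis .
qed

primrec ocache :: "nat \<Rightarrow> 'a list \<Rightarrow> nat \<Rightarrow> 'a set" where
  "ocache k rs 0 = {}"
| "ocache k rs (Suc i) = (if rs ! i \<in> ocache k rs i then ocache k rs i
     else if card (ocache k rs i) < k then insert (rs ! i) (ocache k rs i)
     else insert (rs ! i) (ocache k rs i - {SOME q. q \<in> ocache k rs i}))"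

lemma exists_run:
  assumes k1: "k \<ge> 1"
  shows "offline_run k rs (map (ocache k rs) [0..<Suc (length rs)])"
  unfolding offline_run_def
proof (intro conjI allI impI)
  show "length (map (ocache k rs) [0..<Suc (length rs)]) = Suc (length rs)" by simp
  show "map (ocache k rs) [0..<Suc (length rs)] ! 0 = {}" by (simp del: upt_Suc)
next
  fix i assume i: "i < length rs"
  let ?Cs = "map (ocache k rs) [0..<Suc (length rs)]"
  have e1: "?Cs ! i = ocache k rs i" using i by (simp del: upt_Suc)
  have e2: "?Cs ! Suc i = ocache k rs (Suc i)" using i by (simp del: upt_Suc)
  show "if rs ! i \<in> ?Cs ! i then ?Cs ! Suc i = ?Cs ! i
        else if card (?Cs ! i) < k then ?Cs ! Suc i = insert (rs ! i) (?Cs ! i)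
        else \<exists>q\<in>?Cs ! i. ?Cs ! Suc i = insert (rs ! i) (?Cs ! i - {q})"
  proof -
    have "ocache k rs i \<noteq> {}" if "\<not> card (ocache k rs i) < k" using that k1 by auto
    then have "\<not> card (ocache k rs i) < k \<Longrightarrow> (SOME q. q \<in> ocache k rs i) \<in> ocache k rs i"
      by (metis ex_in_conv someI_ex)
    then show ?thesis unfolding e1 e2 by auto
  qed
qed

lemma OPT_lower:
  assumes k1: "k \<ge> 1"
  shows "(\<Sum>j\<in>JJ k rs. ell k rs j) \<le> 2 * OPT k rs"
proof -
  let ?S = "{run_cost rs Cs | Cs. offline_run k rs Cs}"
  have ne: "?S \<noteq> {}" using exists_run[OF k1, of rs] by blast
  have "?S \<subseteq> {..length rs}"
  proof
    fix x assume "x \<in> ?S"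
    then obtain Cs where x: "x = run_cost rs Cs" by blast
    have "run_cost rs Cs \<le> card {..<length rs}" unfolding run_cost_def by (rule card_mono) auto
    then show "x \<in> {..length rs}" using x by simp
  qed
  then have fin: "finite ?S" by (rule finite_subset) simp
  have "OPT k rs \<in> ?S" unfolding OPT_def using Min_in[OF fin ne] .
  then obtain Cs where "OPT k rs = run_cost rs Cs" "offline_run k rs Cs" by blast
  then show ?thesis using opt_run[OF k1] by simp
qed


lemma tangent:
  fixes l e Y :: real
  assumes l: "l > 0" and e: "e \<ge> 0" and Y: "Y \<ge> 0"
  shows "l * ln (1 + e / l) \<le> l * ln (1 + Y) + (e - Y * l) / (1 + Y)"
proof -
  have a: "1 + e / l > 0" using l e by (simp add: add_pos_nonneg)
  have b: "1 + Y > 0" using Y by simp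
  have "ln ((1 + e / l) / (1 + Y)) \<le> (1 + e / l) / (1 + Y) - 1"
    using a b by (intro ln_le_minus_one) simp
  moreover have "ln ((1 + e / l) / (1 + Y)) = ln (1 + e / l) - ln (1 + Y)" using a b by (simp add: ln_div)
  moreover have "(1 + e / l) / (1 + Y) - 1 = (e / l - Y) / (1 + Y)" using b by (simp add: field_simps)
  ultimately have "ln (1 + e / l) - ln (1 + Y) \<le> (e / l - Y) / (1 + Y)" by simp
  then have h1: "l * (ln (1 + e / l) - ln (1 + Y)) \<le> l * ((e / l - Y) / (1 + Y))"
    using l by (intro mult_left_mono) auto
  have h2: "l * ((e / l - Y) / (1 + Y)) = (e - Y * l) / (1 + Y)"
  proof -
    have "l * (e / l - Y) = e - Y * l" using l by (simp add: algebra_simps)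
    then show ?thesis by (metis times_divide_eq_right)
  qed
  have X: "l * (ln (1 + e / l) - ln (1 + Y)) \<le> (e - Y * l) / (1 + Y)" using h1 h2 by linarith
  have "l * ln (1 + e / l) - l * ln (1 + Y) \<le> (e - Y * l) / (1 + Y)" using X by (simp add: right_diff_distrib)
  then show ?thesis by linarith
qed

lemma final_arith:
  fixes l e :: "nat \<Rightarrow> real" and Op E :: real
  assumes J: "finite J" and lp: "\<forall>j\<in>J. l j > 0" and ep: "\<forall>j\<in>J. e j \<ge> 0"
    and Opos: "Op > 0" and E: "E > 0" and Es: "E = (\<Sum>j\<in>J. e j)" and L: "(\<Sum>j\<in>J. l j) \<le> 2 * Op"
  shows "(\<Sum>j\<in>J. 2 * l j + l j * ln (1 + e j / l j)) \<le> 2 * Op + gamma (E / Op) * E"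
proof -
  define Y where "Y = 2 * E / Op"
  define Ls where "Ls = (\<Sum>j\<in>J. l j)"
  have Yp: "Y > 0" unfolding Y_def using Opos E by simp
  have "(\<Sum>j\<in>J. 2 * l j + l j * ln (1 + e j / l j))
      \<le> (\<Sum>j\<in>J. 2 * l j + (l j * ln (1 + Y) + (e j - Y * l j) / (1 + Y)))"
    by (rule sum_mono) (use tangent lp ep Yp in \<open>auto intro: add_left_mono\<close>)
  also have "\<dots> = (\<Sum>j\<in>J. 2 * l j) + (\<Sum>j\<in>J. l j * ln (1 + Y)) + (\<Sum>j\<in>J. (e j - Y * l j) / (1 + Y))"
    by (simp add: sum.distrib)
  also have "(\<Sum>j\<in>J. (e j - Y * l j) / (1 + Y)) = (E - Y * Ls) / (1 + Y)"
    unfolding Es Ls_def by (simp add: sum_divide_distrib[symmetric] sum_subtractf sum_distrib_left)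
  also have "(\<Sum>j\<in>J. 2 * l j) = 2 * Ls" unfolding Ls_def by (simp add: sum_distrib_left)
  also have "(\<Sum>j\<in>J. l j * ln (1 + Y)) = Ls * ln (1 + Y)" unfolding Ls_def by (simp add: sum_distrib_right)
  finally have A: "(\<Sum>j\<in>J. 2 * l j + l j * ln (1 + e j / l j)) \<le> 2 * Ls + Ls * ln (1 + Y) + (E - Y * Ls) / (1 + Y)" .
  have g: "gamma (E / Op) * E = 2 * Op * (ln (1 + Y) + 1)"
    unfolding gamma_def Y_def using Opos E by (simp add: field_simps)
  define Z where "Z = ln (1 + Y)"
  define q where "q = Y / (1 + Y)"
  have Z0: "Z \<ge> 0" unfolding Z_def using Yp by simp
  have q0: "q \<ge> 0" "q \<le> 1" unfolding q_def using Yp by auto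
  have Eq: "E / (1 + Y) = Op / 2 * q" unfolding q_def Y_def using Opos E by (simp add: field_simps)
  have split: "(E - Y * Ls) / (1 + Y) = E / (1 + Y) - Ls * q" unfolding q_def
    by (simp add: diff_divide_distrib mult.commute)
  have LL: "Ls \<le> 2 * Op" using L unfolding Ls_def .
  have f1: "0 \<le> (2 * Op - Ls) * (2 - q)" using LL q0 by simp
  have f2: "0 \<le> Op * q" using Opos q0 by simp
  have f3: "0 \<le> (2 * Op - Ls) * Z" using LL Z0 by simp
  have f1': "0 \<le> 4 * Op - 2 * (Op * q) - 2 * Ls + Ls * q" using f1 by (simp add: algebra_simps)
  have f3': "0 \<le> 2 * (Op * Z) - Ls * Z" using f3 by (simp add: algebra_simps)
  have "2 * Ls + Ls * ln (1 + Y) + (E - Y * Ls) / (1 + Y) \<le> 2 * Op + 2 * Op * (ln (1 + Y) + 1)"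
    unfolding split Eq Z_def[symmetric] using f1' f2 f3' by (simp add: algebra_simps)
  then show ?thesis using A g by simp
qed

lemma ell_pos:
  assumes k1: "k \<ge> 1" and j: "j \<in> JJ k rs"
  shows "ell k rs j \<ge> 1"
proof -
  have j1: "1 \<le> j" and jn: "phase_start k rs j < length rs" using j unfolding JJ_def by auto
  have jj: "Suc (j - 1) = j" using j1 by simp
  have rO: "rs ! phase_start k rs j \<notin> P k rs (j - 1)"
    using full_phase[OF k1, of rs "j - 1"] jn jj by auto
  have "rs ! phase_start k rs j \<in> P k rs j" unfolding P_def seg_def using st_less[OF jn] by auto
  then have "rs ! phase_start k rs j \<in> P k rs j - P k rs (j - 1)" using rO by simp
  then show ?thesis unfolding ell_def
    by (metis One_nat_def Suc_leI card_gt_0_iff empty_iff finite_Diff finite_P)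
qed

theorem theorem4:
  fixes k :: nat
  assumes "k \<ge> 1"
  shows "\<exists>b :: real. \<forall>(rs :: 'a list) (ps :: bool list).
           length ps = length rs \<longrightarrow> OPT k rs > 0 \<longrightarrow> eta k rs ps True > 0 \<longrightarrow>
           mp_expected_cost k rs ps
             \<le> 2 * real (OPT k rs) + H k * real (eta k rs ps False)
                + gamma (real (eta k rs ps True) / real (OPT k rs)) * real (eta k rs ps True) + b"
proof (intro exI allI impI)
  fix rs :: "'a list" and ps :: "bool list"
  assume len: "length ps = length rs" and opt: "OPT k rs > 0" and et: "eta k rs ps True > 0"
  note k1 = assms
  let ?J = "JJ k rs"
  let ?l = "\<lambda>j. real (ell k rs j)" and ?e = "\<lambda>j. real (E1 k rs ps j)"
  have T: "mp_expected_cost k rs ps \<le> real k + (\<Sum>j\<in>?J. 2 * ?l j + ?l j * ln (1 + ?e j / ?l j) + real (E0 k rs ps j) * H k)"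
    by (rule total_bound[OF k1 len])
  have S: "(\<Sum>j\<in>?J. 2 * ?l j + ?l j * ln (1 + ?e j / ?l j) + real (E0 k rs ps j) * H k)
     = (\<Sum>j\<in>?J. 2 * ?l j + ?l j * ln (1 + ?e j / ?l j)) + H k * real (eta k rs ps False)"
    unfolding eta_False[OF len] by (simp add: sum.distrib sum_distrib_left algebra_simps)
  have E: "real (eta k rs ps True) = (\<Sum>j\<in>?J. ?e j)" unfolding eta_True[OF len] by simp
  have L: "(\<Sum>j\<in>?J. ?l j) \<le> 2 * real (OPT k rs)"
  proof -
    have "(\<Sum>j\<in>?J. ell k rs j) \<le> 2 * OPT k rs" by (rule OPT_lower[OF k1])
    then have "real (\<Sum>j\<in>?J. ell k rs j) \<le> real (2 * OPT k rs)" by (simp only: of_nat_le_iff)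
    then show ?thesis by simp
  qed
  have F: "(\<Sum>j\<in>?J. 2 * ?l j + ?l j * ln (1 + ?e j / ?l j))
      \<le> 2 * real (OPT k rs) + gamma (real (eta k rs ps True) / real (OPT k rs)) * real (eta k rs ps True)"
  proof (rule final_arith[OF finite_JJ _ _ _ _ E L])
    show "\<forall>j\<in>?J. ?l j > 0"
    proof
      fix j assume "j \<in> ?J"
      then have "ell k rs j \<ge> 1" by (rule ell_pos[OF k1])
      then show "?l j > 0" by simp
    qed
  qed (use opt et in auto)
  show "mp_expected_cost k rs ps
             \<le> 2 * real (OPT k rs) + H k * real (eta k rs ps False)
                + gamma (real (eta k rs ps True) / real (OPT k rs)) * real (eta k rs ps True) + real k"
    using T S F by linarith
qed


end
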